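(* Let $(X,\mu)$ be a Lebesgue space with a continuous probability measure $\mu$, and let $\rho$ be an almost-metric on $X$. (1) There exists an everywhere finite semimetric $\tilde\rho$ on $X$ that is equivalent to $\rho$, i.e. $\tilde\rho(x,y)=\rho(x,y)$ for $(\mu\times\mu)$-almost all $(x,y)\in X\times X$. (2) If moreover $\rho$ is essentially separable, then $\tilde\rho$ in (1) can be chosen so that $(X,\tilde\rho)$ is a separable semimetric space; in particular $\tilde\rho$ can be chosen admissible.
   Context: An almost-metric on a Lebesgue probability space $(X,\mu)$ is a measurable non-negative function $\rho$ on $(X\times X,\mu\times\mu)$ such that $\rho(x,y)=\rho(y,x)$ and $\rho(x,z)\le\rho(x,y)+\rho(y,z)$ for almost all $x,y,z\in X$. The essential diameter of a set $A\subset X$ is the essential supremum of $\rho$ restricted to $A\times A$. The almost-metric $\rho$ is essentially separable if for every $\varepsilon>0$ the space $X$ can be covered by countably many measurable sets of essential diameter less than $\varepsilon$. A semimetric is a finite non-negative symmetric function satisfying the triangle inequality everywhere and vanishing on the diagonal (it may vanish off the diagonal). A (semi)metric on a Lebesgue space is admissible if its restriction to some set of full measure is a separable (semi)metric space. *)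

theory Defs
  imports "HOL-Probability.Probability"
begin

definition iso_mod0 :: "'a measure \<Rightarrow> 'b measure \<Rightarrow> bool" where
  "iso_mod0 M N \<longleftrightarrow> (\<exists>A B f.
      A \<in> sets M \<and> space M - A \<in> null_sets M \<and>
      B \<in> sets N \<and> space N - B \<in> null_sets N \<and>
      bij_betw f A B \<and>
      (\<forall>S. S \<subseteq> A \<longrightarrow> (S \<in> sets M \<longleftrightarrow> f ` S \<in> sets N)) \<and>
      (\<forall>S. S \<in> sets M \<longrightarrow> S \<subseteq> A \<longrightarrow> emeasure N (f ` S) = emeasure M S))"

text \<open>Lebesgue (standard) probability space: a complete probability space that is
  isomorphic mod 0 to the completion of a Borel probability measure on the real line
  (equivalently, on a standard Borel / Polish space).\<close>
definition lebesgue_space :: "'a measure \<Rightarrow> bool" where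
  "lebesgue_space M \<longleftrightarrow> prob_space M \<and> complete_measure M \<and>
     (\<exists>\<nu> :: real measure. prob_space \<nu> \<and> sets \<nu> = sets borel \<and> iso_mod0 M (completion \<nu>))"

definition continuous_measure :: "'a measure \<Rightarrow> bool" where
  "continuous_measure M \<longleftrightarrow> (\<forall>x\<in>space M. {x} \<in> null_sets M)"

definition almost_metric :: "'a measure \<Rightarrow> ('a \<Rightarrow> 'a \<Rightarrow> real) \<Rightarrow> bool" where
  "almost_metric M \<rho> \<longleftrightarrow>
     (\<lambda>(x, y). \<rho> x y) \<in> borel_measurable (completion (M \<Otimes>\<^sub>M M)) \<and>
     (\<forall>x\<in>space M. \<forall>y\<in>space M. 0 \<le> \<rho> x y) \<and>
     (AE p in M \<Otimes>\<^sub>M M. \<rho> (fst p) (snd p) = \<rho> (snd p) (fst p)) \<and>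
     (AE t in M \<Otimes>\<^sub>M (M \<Otimes>\<^sub>M M).
        \<rho> (fst t) (snd (snd t)) \<le> \<rho> (fst t) (fst (snd t)) + \<rho> (fst (snd t)) (snd (snd t)))"

text \<open>Essential diameter of A: essential supremum of \<rho> restricted to A\<times>A
  (value -\<infinity> outside A\<times>A, so that only A\<times>A matters).\<close>
definition ess_diam :: "'a measure \<Rightarrow> ('a \<Rightarrow> 'a \<Rightarrow> real) \<Rightarrow> 'a set \<Rightarrow> ereal" where
  "ess_diam M \<rho> A = esssup (completion (M \<Otimes>\<^sub>M M))
     (\<lambda>(x, y). if x \<in> A \<and> y \<in> A then ereal (\<rho> x y) else -\<infinity>)"

definition essentially_separable :: "'a measure \<Rightarrow> ('a \<Rightarrow> 'a \<Rightarrow> real) \<Rightarrow> bool" where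
  "essentially_separable M \<rho> \<longleftrightarrow> (\<forall>\<epsilon>>0. \<exists>\<A>. countable \<A> \<and> \<A> \<subseteq> sets M \<and>
     space M \<subseteq> \<Union>\<A> \<and> (\<forall>A\<in>\<A>. ess_diam M \<rho> A < ereal \<epsilon>))"

definition semimetric_on :: "'a set \<Rightarrow> ('a \<Rightarrow> 'a \<Rightarrow> real) \<Rightarrow> bool" where
  "semimetric_on X d \<longleftrightarrow>
     (\<forall>x\<in>X. d x x = 0) \<and>
     (\<forall>x\<in>X. \<forall>y\<in>X. 0 \<le> d x y \<and> d x y = d y x) \<and>
     (\<forall>x\<in>X. \<forall>y\<in>X. \<forall>z\<in>X. d x z \<le> d x y + d y z)"

definition separable_on :: "'a set \<Rightarrow> ('a \<Rightarrow> 'a \<Rightarrow> real) \<Rightarrow> bool" where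
  "separable_on X d \<longleftrightarrow>
     (\<exists>D. countable D \<and> D \<subseteq> X \<and> (\<forall>x\<in>X. \<forall>\<epsilon>>0. \<exists>c\<in>D. d x c < \<epsilon>))"

definition admissible :: "'a measure \<Rightarrow> ('a \<Rightarrow> 'a \<Rightarrow> real) \<Rightarrow> bool" where
  "admissible M d \<longleftrightarrow> semimetric_on (space M) d \<and>
     (\<exists>X0\<in>sets M. space M - X0 \<in> null_sets M \<and> separable_on X0 d)"

end

theory Submission
  imports Defs "HOL-Library.Diagonal_Subsequence"
begin

locale cellsys = prob_space M for M :: "'a measure" +
  fixes E :: "nat \<Rightarrow> 'a set"
  assumes E_sets: "\<And>i. E i \<in> sets M"
begin

definition cell :: "nat \<Rightarrow> 'a \<Rightarrow> 'a set" where
  "cell n x = {y \<in> space M. \<forall>i<n. (y \<in> E i \<longleftrightarrow> x \<in> E i)}"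

definition cells :: "nat \<Rightarrow> 'a set set" where
  "cells n = cell n ` space M"

lemma cell_sets[measurable]: "cell n x \<in> sets M"
proof -
  have [measurable]: "\<And>i. E i \<in> sets M" by (rule E_sets)
  show ?thesis unfolding cell_def by measurable
qed

lemma cell_subset: "cell n x \<subseteq> space M"
  by (auto simp: cell_def)

lemma in_cell: "x \<in> space M \<Longrightarrow> x \<in> cell n x"
  by (auto simp: cell_def)

lemma cell_eq: "y \<in> cell n x \<Longrightarrow> cell n y = cell n x"
  by (auto simp: cell_def)

lemma cell_mono: "m \<le> n \<Longrightarrow> cell n x \<subseteq> cell m x"
  by (auto simp: cell_def)

lemma cells_finite: "finite (cells n)"
proof -
  have "cells n \<subseteq> (\<lambda>I. {y \<in> space M. \<forall>i<n. (y \<in> E i \<longleftrightarrow> i \<in> I)}) ` Pow {..<n}"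
    unfolding cells_def cell_def
    by (rule image_subsetI, rule image_eqI[where x="{i. i<n \<and> _ \<in> E i}"]) auto
  then show ?thesis by (rule finite_subset) auto
qed

lemma cells_sets: "C \<in> cells n \<Longrightarrow> C \<in> sets M"
  by (auto simp: cells_def)

lemma cells_cell: "C \<in> cells n \<Longrightarrow> x \<in> C \<Longrightarrow> C = cell n x"
  by (auto simp: cells_def dest: cell_eq)

lemma cell_in_cells: "x \<in> space M \<Longrightarrow> cell n x \<in> cells n"
  by (auto simp: cells_def)

sublocale PP: pair_prob_space M M by unfold_locales

abbreviation PM where "PM \<equiv> M \<Otimes>\<^sub>M M"

lemma measure_PM_Times: "A \<in> sets M \<Longrightarrow> B \<in> sets M \<Longrightarrow> measure PM (A \<times> B) = measure M A * measure M B"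
  by (simp add: measure_def emeasure_pair_measure_Times enn2real_mult)

definition coef :: "nat \<Rightarrow> ('a \<times> 'a \<Rightarrow> real) \<Rightarrow> 'a set \<times> 'a set \<Rightarrow> real" where
  "coef n h CD = (\<integral>q. indicator (fst CD \<times> snd CD) q * h q \<partial>PM) / (measure M (fst CD) * measure M (snd CD))"

definition Av :: "nat \<Rightarrow> ('a \<times> 'a \<Rightarrow> real) \<Rightarrow> 'a \<times> 'a \<Rightarrow> real" where
  "Av n h p = coef n h (cell n (fst p), cell n (snd p))"

lemma indicator_cells:
  assumes "p \<in> space PM" "CD \<in> cells n \<times> cells n"
  shows "indicator (fst CD \<times> snd CD) p = (if CD = (cell n (fst p), cell n (snd p)) then 1 else (0::real))"
proof -
  obtain C D where CD: "CD = (C, D)" "C \<in> cells n" "D \<in> cells n" using assms(2) by auto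
  have sp: "fst p \<in> space M" "snd p \<in> space M" using assms(1) by (auto simp: space_pair_measure)
  show ?thesis
    using CD sp cells_cell[of C n "fst p"] cells_cell[of D n "snd p"] in_cell[of "fst p" n] in_cell[of "snd p" n]
  proof (cases "CD = (cell n (fst p), cell n (snd p))")
    case True
    then show ?thesis using sp in_cell[of "fst p" n] in_cell[of "snd p" n] by (cases p) (simp add: indicator_def)
  next
    case False
    have "p \<notin> C \<times> D"
    proof
      assume "p \<in> C \<times> D"
      then have "C = cell n (fst p)" "D = cell n (snd p)"
        using CD cells_cell[of C n "fst p"] cells_cell[of D n "snd p"] by (auto simp: mem_Times_iff)
      then show False using False CD by simp
    qed
    then show ?thesis using False CD by (simp add: indicator_def)
  qed
qed

lemma Av_sum:
  assumes "p \<in> space PM"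
  shows "Av n h p = (\<Sum>CD\<in>cells n \<times> cells n. indicator (fst CD \<times> snd CD) p * coef n h CD)"
proof -
  have sp: "fst p \<in> space M" "snd p \<in> space M" using assms by (auto simp: space_pair_measure)
  have "(\<Sum>CD\<in>cells n \<times> cells n. indicator (fst CD \<times> snd CD) p * coef n h CD)
      = (\<Sum>CD\<in>cells n \<times> cells n. (if CD = (cell n (fst p), cell n (snd p)) then coef n h CD else 0))"
    by (intro sum.cong refl) (simp add: indicator_cells[OF assms])
  also have "\<dots> = coef n h (cell n (fst p), cell n (snd p))"
    using sp cell_in_cells by (simp add: sum.delta' cells_finite)
  finally show ?thesis by (simp add: Av_def)
qed

lemma Av_measurable[measurable]: "Av n h \<in> borel_measurable PM"
proof -
  have [measurable]: "\<And>CD. CD \<in> cells n \<times> cells n \<Longrightarrow> fst CD \<times> snd CD \<in> sets PM"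
    by (auto intro!: pair_measureI cells_sets)
  have "(\<lambda>p. \<Sum>CD\<in>cells n \<times> cells n. indicator (fst CD \<times> snd CD) p * coef n h CD) \<in> borel_measurable PM"
    by (intro borel_measurable_sum borel_measurable_times borel_measurable_indicator) auto
  then show ?thesis
    by (rule measurable_cong[THEN iffD1, rotated]) (simp add: Av_sum)
qed

lemma Av_integrable: "integrable PM (Av n h)"
proof -
  have [measurable]: "\<And>CD. CD \<in> cells n \<times> cells n \<Longrightarrow> fst CD \<times> snd CD \<in> sets PM"
    by (auto intro!: pair_measureI cells_sets)
  have "integrable PM (\<lambda>p. \<Sum>CD\<in>cells n \<times> cells n. indicator (fst CD \<times> snd CD) p * coef n h CD)"
  proof (rule Bochner_Integration.integrable_sum)
    fix CD assume "CD \<in> cells n \<times> cells n"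
    then have "fst CD \<times> snd CD \<in> sets PM" by (auto intro!: pair_measureI cells_sets)
    then show "integrable PM (\<lambda>p. indicator (fst CD \<times> snd CD) p * coef n h CD)"
      by (intro integrable_mult_left) (simp add: integrable_indicator_iff PP.emeasure_finite less_top[symmetric])
  qed
  moreover have "integrable PM (Av n h) = integrable PM (\<lambda>p. \<Sum>CD\<in>cells n \<times> cells n. indicator (fst CD \<times> snd CD) p * coef n h CD)"
    by (rule Bochner_Integration.integrable_cong[OF refl Av_sum])
  ultimately show ?thesis by simp
qed

lemma rect_sets[measurable]: "CD \<in> cells n \<times> cells n \<Longrightarrow> fst CD \<times> snd CD \<in> sets PM"
  by (auto intro!: pair_measureI cells_sets)

lemma sum_ind:
  assumes "p \<in> space PM"
  shows "(\<Sum>CD\<in>cells n \<times> cells n. indicator (fst CD \<times> snd CD) p) = (1::real)"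
proof -
  have sp: "fst p \<in> space M" "snd p \<in> space M" using assms by (auto simp: space_pair_measure)
  have "(\<Sum>CD\<in>cells n \<times> cells n. indicator (fst CD \<times> snd CD) p)
      = (\<Sum>CD\<in>cells n \<times> cells n. (if CD = (cell n (fst p), cell n (snd p)) then 1 else 0::real))"
    by (intro sum.cong refl) (simp add: indicator_cells[OF assms])
  also have "\<dots> = 1"
    using sp cell_in_cells by (simp add: sum.delta' cells_finite)
  finally show ?thesis .
qed

lemma int_ind: "A \<in> sets PM \<Longrightarrow> integrable PM f \<Longrightarrow> integrable PM (\<lambda>q. indicator A q * f q :: real)"
  using integrable_mult_indicator[of A PM f] by simp

lemma integral_null_ind:
  fixes f :: "'a \<times> 'a \<Rightarrow> real"
  assumes "A \<in> sets PM" "measure PM A = 0"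
  shows "(\<integral>q. indicator A q * f q \<partial>PM) = 0"
proof (rule integral_eq_zero_AE)
  have "A \<in> null_sets PM" using assms by (simp add: null_sets_def PP.emeasure_eq_measure)
  then show "AE q in PM. indicator A q * f q = 0"
    by (rule AE_mp[OF AE_not_in]) (auto intro!: AE_I2)
qed

lemma coef_mult:
  assumes "CD \<in> cells n \<times> cells n"
  shows "measure PM (fst CD \<times> snd CD) * coef n f CD = (\<integral>q. indicator (fst CD \<times> snd CD) q * f q \<partial>PM)"
proof -
  have m: "measure PM (fst CD \<times> snd CD) = measure M (fst CD) * measure M (snd CD)"
    using assms by (intro measure_PM_Times) (auto intro: cells_sets)
  show ?thesis
  proof (cases "measure M (fst CD) * measure M (snd CD) = 0")
    case True
    then have "measure PM (fst CD \<times> snd CD) = 0" using m by simp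
    then show ?thesis using integral_null_ind[OF rect_sets[OF assms]] by simp
  next
    case False
    then show ?thesis by (simp add: m coef_def)
  qed
qed

lemma Av_integral:
  assumes f: "integrable PM f"
  shows "integral\<^sup>L PM (Av n f) = integral\<^sup>L PM f"
proof -
  have "integral\<^sup>L PM (Av n f) = (\<integral>p. (\<Sum>CD\<in>cells n \<times> cells n. indicator (fst CD \<times> snd CD) p * coef n f CD) \<partial>PM)"
    by (intro Bochner_Integration.integral_cong refl) (simp add: Av_sum)
  also have "\<dots> = (\<Sum>CD\<in>cells n \<times> cells n. (\<integral>p. indicator (fst CD \<times> snd CD) p * coef n f CD \<partial>PM))"
    by (rule Bochner_Integration.integral_sum)
       (auto intro!: integrable_mult_left simp: integrable_indicator_iff PP.emeasure_finite less_top[symmetric])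
  also have "\<dots> = (\<Sum>CD\<in>cells n \<times> cells n. measure PM (fst CD \<times> snd CD) * coef n f CD)"
    by (intro sum.cong refl) (simp add: integral_mult_left_zero)
  also have "\<dots> = (\<Sum>CD\<in>cells n \<times> cells n. (\<integral>q. indicator (fst CD \<times> snd CD) q * f q \<partial>PM))"
    by (intro sum.cong refl coef_mult)
  also have "\<dots> = (\<integral>q. (\<Sum>CD\<in>cells n \<times> cells n. indicator (fst CD \<times> snd CD) q * f q) \<partial>PM)"
    by (rule Bochner_Integration.integral_sum[symmetric])
       (auto intro!: int_ind f pair_measureI cells_sets)
  also have "\<dots> = integral\<^sup>L PM f"
    by (intro Bochner_Integration.integral_cong refl)
       (simp add: sum_distrib_right[symmetric] sum_ind)
  finally show ?thesis .
qed

lemma cellrect_sets[measurable]: "cell n x \<times> cell n y \<in> sets PM"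
  by (auto intro!: pair_measureI cell_sets)

lemma Av_diff:
  fixes f g :: "'a \<times> 'a \<Rightarrow> real"
  assumes "integrable PM f" "integrable PM g"
  shows "Av n (\<lambda>q. f q - g q) p = Av n f p - Av n g p"
proof -
  have "(\<integral>q. indicator (cell n (fst p) \<times> cell n (snd p)) q * (f q - g q) \<partial>PM)
     = (\<integral>q. indicator (cell n (fst p) \<times> cell n (snd p)) q * f q - indicator (cell n (fst p) \<times> cell n (snd p)) q * g q \<partial>PM)"
    by (simp add: algebra_simps)
  also have "\<dots> = (\<integral>q. indicator (cell n (fst p) \<times> cell n (snd p)) q * f q \<partial>PM) - (\<integral>q. indicator (cell n (fst p) \<times> cell n (snd p)) q * g q \<partial>PM)"
    by (rule Bochner_Integration.integral_diff) (auto intro!: int_ind assms)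
  finally show ?thesis by (simp add: Av_def coef_def diff_divide_distrib)
qed

lemma Av_add:
  fixes f g :: "'a \<times> 'a \<Rightarrow> real"
  assumes "integrable PM f" "integrable PM g"
  shows "Av n (\<lambda>q. f q + g q) p = Av n f p + Av n g p"
proof -
  have "(\<integral>q. indicator (cell n (fst p) \<times> cell n (snd p)) q * (f q + g q) \<partial>PM)
     = (\<integral>q. indicator (cell n (fst p) \<times> cell n (snd p)) q * f q + indicator (cell n (fst p) \<times> cell n (snd p)) q * g q \<partial>PM)"
    by (simp add: algebra_simps)
  also have "\<dots> = (\<integral>q. indicator (cell n (fst p) \<times> cell n (snd p)) q * f q \<partial>PM) + (\<integral>q. indicator (cell n (fst p) \<times> cell n (snd p)) q * g q \<partial>PM)"
    by (rule Bochner_Integration.integral_add) (auto intro!: int_ind assms)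
  finally show ?thesis by (simp add: Av_def coef_def add_divide_distrib)
qed

lemma Av_cmult:
  fixes f :: "'a \<times> 'a \<Rightarrow> real"
  shows "Av n (\<lambda>q. c * f q) p = c * Av n f p"
proof -
  have "(\<integral>q. indicator (cell n (fst p) \<times> cell n (snd p)) q * (c * f q) \<partial>PM)
     = c * (\<integral>q. indicator (cell n (fst p) \<times> cell n (snd p)) q * f q \<partial>PM)"
    by (simp add: algebra_simps)
  then show ?thesis by (simp add: Av_def coef_def)
qed

lemma Av_cong:
  fixes f g :: "'a \<times> 'a \<Rightarrow> real"
  assumes "AE q in PM. f q = g q" and [measurable]: "f \<in> borel_measurable PM" "g \<in> borel_measurable PM"
  shows "Av n f p = Av n g p"
proof -
  have "(\<integral>q. indicator (cell n (fst p) \<times> cell n (snd p)) q * f q \<partial>PM)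
     = (\<integral>q. indicator (cell n (fst p) \<times> cell n (snd p)) q * g q \<partial>PM)"
    by (rule integral_cong_AE) (use assms in auto)
  then show ?thesis by (simp add: Av_def coef_def)
qed

lemma Av_mono:
  fixes f g :: "'a \<times> 'a \<Rightarrow> real"
  assumes "integrable PM f" "integrable PM g" "AE q in PM. f q \<le> g q"
  shows "Av n f p \<le> Av n g p"
proof -
  have "(\<integral>q. indicator (cell n (fst p) \<times> cell n (snd p)) q * f q \<partial>PM)
     \<le> (\<integral>q. indicator (cell n (fst p) \<times> cell n (snd p)) q * g q \<partial>PM)"
  proof (rule integral_mono_AE)
    show "integrable PM (\<lambda>q. indicator (cell n (fst p) \<times> cell n (snd p)) q * f q)"
      by (intro int_ind assms cellrect_sets)
    show "integrable PM (\<lambda>q. indicator (cell n (fst p) \<times> cell n (snd p)) q * g q)"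
      by (intro int_ind assms cellrect_sets)
    show "AE q in PM. indicator (cell n (fst p) \<times> cell n (snd p)) q * f q \<le> indicator (cell n (fst p) \<times> cell n (snd p)) q * g q"
      using assms(3) by eventually_elim (simp add: indicator_def)
  qed
  then show ?thesis by (simp add: Av_def coef_def divide_right_mono)
qed

lemma Av_abs:
  fixes f :: "'a \<times> 'a \<Rightarrow> real"
  assumes "integrable PM f"
  shows "\<bar>Av n f p\<bar> \<le> Av n (\<lambda>q. \<bar>f q\<bar>) p"
proof -
  have "\<bar>\<integral>q. indicator (cell n (fst p) \<times> cell n (snd p)) q * f q \<partial>PM\<bar>
     \<le> (\<integral>q. \<bar>indicator (cell n (fst p) \<times> cell n (snd p)) q * f q\<bar> \<partial>PM)"
    using integral_norm_bound[of PM "\<lambda>q. indicator (cell n (fst p) \<times> cell n (snd p)) q * f q"] by simp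
  also have "\<dots> = (\<integral>q. indicator (cell n (fst p) \<times> cell n (snd p)) q * \<bar>f q\<bar> \<partial>PM)"
    by (simp add: abs_mult)
  finally show ?thesis by (simp add: Av_def coef_def abs_div_pos divide_right_mono)
qed

lemma Av_contract:
  fixes f :: "'a \<times> 'a \<Rightarrow> real"
  assumes "integrable PM f"
  shows "(\<integral>q. \<bar>Av n f q\<bar> \<partial>PM) \<le> (\<integral>q. \<bar>f q\<bar> \<partial>PM)"
proof -
  have "(\<integral>q. \<bar>Av n f q\<bar> \<partial>PM) \<le> (\<integral>q. Av n (\<lambda>q. \<bar>f q\<bar>) q \<partial>PM)"
    by (intro integral_mono Av_integrable Av_abs assms integrable_abs)
  also have "\<dots> = (\<integral>q. \<bar>f q\<bar> \<partial>PM)"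
    by (intro Av_integral integrable_abs assms)
  finally show ?thesis .
qed

definition conv :: "('a \<times> 'a \<Rightarrow> real) \<Rightarrow> bool" where
  "conv h \<longleftrightarrow> integrable PM h \<and> (\<lambda>n. \<integral>q. \<bar>Av n h q - h q\<bar> \<partial>PM) \<longlonglongrightarrow> 0"

lemma err_bound:
  fixes h g :: "'a \<times> 'a \<Rightarrow> real"
  assumes h: "integrable PM h" and g: "integrable PM g"
  shows "(\<integral>q. \<bar>Av n h q - h q\<bar> \<partial>PM) \<le> 2 * (\<integral>q. \<bar>h q - g q\<bar> \<partial>PM) + (\<integral>q. \<bar>Av n g q - g q\<bar> \<partial>PM)"
proof -
  have hg: "integrable PM (\<lambda>q. h q - g q)" using h g by auto
  have eq: "\<And>q. Av n h q - h q = Av n (\<lambda>q. h q - g q) q + (Av n g q - g q) + (g q - h q)"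
    using Av_diff[OF h g] by simp
  have "(\<integral>q. \<bar>Av n h q - h q\<bar> \<partial>PM) \<le> (\<integral>q. \<bar>Av n (\<lambda>q. h q - g q) q\<bar> + \<bar>Av n g q - g q\<bar> + \<bar>h q - g q\<bar> \<partial>PM)"
    by (intro integral_mono) (auto intro!: Bochner_Integration.integrable_add Bochner_Integration.integrable_diff integrable_abs Av_integrable h g simp: eq)
  also have "\<dots> = (\<integral>q. \<bar>Av n (\<lambda>q. h q - g q) q\<bar> \<partial>PM) + (\<integral>q. \<bar>Av n g q - g q\<bar> \<partial>PM) + (\<integral>q. \<bar>h q - g q\<bar> \<partial>PM)"
    using h g by (simp add: Av_integrable)
  also have "\<dots> \<le> (\<integral>q. \<bar>h q - g q\<bar> \<partial>PM) + (\<integral>q. \<bar>Av n g q - g q\<bar> \<partial>PM) + (\<integral>q. \<bar>h q - g q\<bar> \<partial>PM)"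
    using Av_contract[OF hg, of n] by simp
  finally show ?thesis by simp
qed

lemma conv_close:
  fixes h :: "'a \<times> 'a \<Rightarrow> real"
  assumes h: "integrable PM h" and s: "\<And>m. conv (s m)"
    and lim: "(\<lambda>m. \<integral>q. \<bar>h q - s m q\<bar> \<partial>PM) \<longlonglongrightarrow> 0"
  shows "conv h"
  unfolding conv_def
proof (intro conjI h LIMSEQ_I)
  fix r :: real assume r: "0 < r"
  from LIMSEQ_D[OF lim, of "r/4"] r obtain m where m: "\<bar>\<integral>q. \<bar>h q - s m q\<bar> \<partial>PM\<bar> < r/4"
    by auto
  have sm: "integrable PM (s m)" "(\<lambda>n. \<integral>q. \<bar>Av n (s m) q - s m q\<bar> \<partial>PM) \<longlonglongrightarrow> 0"
    using s[of m] by (auto simp: conv_def)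
  from LIMSEQ_D[OF sm(2), of "r/4"] r obtain N where N: "\<And>n. N \<le> n \<Longrightarrow> \<bar>\<integral>q. \<bar>Av n (s m) q - s m q\<bar> \<partial>PM\<bar> < r/4"
    by auto
  show "\<exists>N. \<forall>n\<ge>N. norm ((\<integral>q. \<bar>Av n h q - h q\<bar> \<partial>PM) - 0) < r"
  proof (intro exI allI impI)
    fix n assume "N \<le> n"
    have "(\<integral>q. \<bar>Av n h q - h q\<bar> \<partial>PM) \<le> 2 * (\<integral>q. \<bar>h q - s m q\<bar> \<partial>PM) + (\<integral>q. \<bar>Av n (s m) q - s m q\<bar> \<partial>PM)"
      by (rule err_bound[OF h sm(1)])
    moreover have "0 \<le> (\<integral>q. \<bar>Av n h q - h q\<bar> \<partial>PM)" by simp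
    ultimately show "norm ((\<integral>q. \<bar>Av n h q - h q\<bar> \<partial>PM) - 0) < r"
      using m N[OF \<open>N \<le> n\<close>] by (simp; linarith)
  qed
qed

lemma conv_add:
  fixes f g :: "'a \<times> 'a \<Rightarrow> real"
  assumes "conv f" "conv g"
  shows "conv (\<lambda>q. f q + g q)"
proof -
  have f: "integrable PM f" "(\<lambda>n. \<integral>q. \<bar>Av n f q - f q\<bar> \<partial>PM) \<longlonglongrightarrow> 0" using assms by (auto simp: conv_def)
  have g: "integrable PM g" "(\<lambda>n. \<integral>q. \<bar>Av n g q - g q\<bar> \<partial>PM) \<longlonglongrightarrow> 0" using assms by (auto simp: conv_def)
  have le: "(\<integral>q. \<bar>Av n (\<lambda>q. f q + g q) q - (f q + g q)\<bar> \<partial>PM) \<le> (\<integral>q. \<bar>Av n f q - f q\<bar> \<partial>PM) + (\<integral>q. \<bar>Av n g q - g q\<bar> \<partial>PM)" for n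
  proof -
    have "(\<integral>q. \<bar>Av n (\<lambda>q. f q + g q) q - (f q + g q)\<bar> \<partial>PM) \<le> (\<integral>q. \<bar>Av n f q - f q\<bar> + \<bar>Av n g q - g q\<bar> \<partial>PM)"
      by (intro integral_mono) (auto intro!: Bochner_Integration.integrable_add Bochner_Integration.integrable_diff integrable_abs Av_integrable f g simp: Av_add[OF f(1) g(1)])
    also have "\<dots> = (\<integral>q. \<bar>Av n f q - f q\<bar> \<partial>PM) + (\<integral>q. \<bar>Av n g q - g q\<bar> \<partial>PM)"
      using f g by (simp add: Av_integrable)
    finally show ?thesis .
  qed
  have "(\<lambda>n. \<integral>q. \<bar>Av n (\<lambda>q. f q + g q) q - (f q + g q)\<bar> \<partial>PM) \<longlonglongrightarrow> 0"
    by (rule real_tendsto_sandwich[of "\<lambda>_. 0" _ _ "\<lambda>n. (\<integral>q. \<bar>Av n f q - f q\<bar> \<partial>PM) + (\<integral>q. \<bar>Av n g q - g q\<bar> \<partial>PM)"])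
       (use le f g tendsto_add[OF f(2) g(2)] in auto)
  then show ?thesis using f g by (simp add: conv_def)
qed

lemma conv_cmult:
  fixes f :: "'a \<times> 'a \<Rightarrow> real"
  assumes "conv f"
  shows "conv (\<lambda>q. c * f q)"
proof -
  have f: "integrable PM f" "(\<lambda>n. \<integral>q. \<bar>Av n f q - f q\<bar> \<partial>PM) \<longlonglongrightarrow> 0" using assms by (auto simp: conv_def)
  have "(\<lambda>n. \<bar>c\<bar> * (\<integral>q. \<bar>Av n f q - f q\<bar> \<partial>PM)) \<longlonglongrightarrow> \<bar>c\<bar> * 0"
    by (intro tendsto_mult tendsto_const f)
  moreover have "(\<integral>q. \<bar>Av n (\<lambda>q. c * f q) q - c * f q\<bar> \<partial>PM) = \<bar>c\<bar> * (\<integral>q. \<bar>Av n f q - f q\<bar> \<partial>PM)" for n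
    by (simp add: Av_cmult right_diff_distrib[symmetric] abs_mult)
  ultimately show ?thesis using f by (simp add: conv_def)
qed

lemma conv_cong:
  fixes f g :: "'a \<times> 'a \<Rightarrow> real"
  assumes "conv f" "\<And>q. q \<in> space PM \<Longrightarrow> f q = g q"
  shows "conv g"
proof -
  have ae: "AE q in PM. f q = g q" using assms(2) by auto
  have ig: "integrable PM g" using assms by (metis (no_types, lifting) Bochner_Integration.integrable_cong conv_def)
  have fm: "f \<in> borel_measurable PM" using assms(1) by (auto simp: conv_def)
  have gm: "g \<in> borel_measurable PM" using ig by auto
  moreover have "(\<integral>q. \<bar>Av n g q - g q\<bar> \<partial>PM) = (\<integral>q. \<bar>Av n f q - f q\<bar> \<partial>PM)" for n
    by (intro Bochner_Integration.integral_cong refl) (simp add: Av_cong[OF ae fm gm] assms(2))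
  ultimately show ?thesis using assms(1) ig by (simp add: conv_def)
qed

lemma AE_fstI:
  assumes "AE x in M. P x"
  shows "AE q in PM. P (fst q)"
proof -
  obtain N where N: "N \<in> null_sets M" "{x\<in>space M. \<not> P x} \<subseteq> N" using assms by (auto simp: eventually_ae_filter)
  have "N \<times> space M \<in> null_sets PM"
    using N(1) by (simp add: null_sets_def emeasure_pair_measure_Times pair_measureI)
  moreover have "{q \<in> space PM. \<not> P (fst q)} \<subseteq> N \<times> space M"
    using N(2) by (auto simp: space_pair_measure)
  ultimately show ?thesis by (auto simp: eventually_ae_filter)
qed

lemma AE_sndI:
  assumes "AE x in M. P x"
  shows "AE q in PM. P (snd q)"
proof -
  obtain N where N: "N \<in> null_sets M" "{x\<in>space M. \<not> P x} \<subseteq> N" using assms by (auto simp: eventually_ae_filter)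
  have "space M \<times> N \<in> null_sets PM"
    using N(1) by (simp add: null_sets_def emeasure_pair_measure_Times pair_measureI)
  moreover have "{q \<in> space PM. \<not> P (snd q)} \<subseteq> space M \<times> N"
    using N(2) by (auto simp: space_pair_measure)
  ultimately show ?thesis by (auto simp: eventually_ae_filter)
qed

lemma AE_cell_pos: "AE x in M. \<forall>n. measure M (cell n x) \<noteq> 0"
proof (subst AE_all_countable, intro allI)
  fix n
  let ?Z = "\<Union>{C \<in> cells n. measure M C = 0}"
  have "?Z \<in> null_sets M"
  proof (rule null_sets.finite_Union)
    show "finite {C \<in> cells n. measure M C = 0}" using cells_finite by auto
    show "{C \<in> cells n. measure M C = 0} \<subseteq> null_sets M"
      using cells_sets by (auto simp: null_sets_def emeasure_eq_measure)
  qed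
  then have "AE x in M. x \<notin> ?Z" by (rule AE_not_in)
  then show "AE x in M. measure M (cell n x) \<noteq> 0"
  proof (rule AE_mp, intro AE_I2 impI)
    fix x assume "x \<in> space M" "x \<notin> ?Z"
    then show "measure M (cell n x) \<noteq> 0"
      using cell_in_cells[of x n] in_cell[of x n] by blast
  qed
qed

definition saturated :: "nat \<Rightarrow> 'a set \<Rightarrow> bool" where
  "saturated n U \<longleftrightarrow> U \<in> sets M \<and> (\<forall>x\<in>U. cell n x \<subseteq> U)"

lemma saturated_mono: "saturated N U \<Longrightarrow> N \<le> n \<Longrightarrow> saturated n U"
  unfolding saturated_def using cell_mono by blast

lemma saturated_disj:
  assumes "saturated n U" "x \<in> space M" "x \<notin> U"
  shows "cell n x \<inter> U = {}"
proof (rule ccontr)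
  assume "cell n x \<inter> U \<noteq> {}"
  then obtain y where y: "y \<in> cell n x" "y \<in> U" by auto
  then have "cell n x \<subseteq> U" using assms(1) cell_eq[OF y(1)] by (auto simp: saturated_def)
  then show False using in_cell[OF assms(2)] assms(3) by auto
qed

lemma conv_sat_rect:
  assumes U: "saturated N U" and V: "saturated N V"
  shows "conv (indicator (U \<times> V))"
proof -
  have UV[measurable]: "U \<times> V \<in> sets PM" using U V by (auto simp: saturated_def intro!: pair_measureI)
  have "eventually (\<lambda>n. (\<integral>q. \<bar>Av n (indicator (U \<times> V)) q - indicator (U \<times> V) q\<bar> \<partial>PM) = 0) sequentially"
    unfolding eventually_sequentially
  proof (intro exI allI impI)
    fix n assume "N \<le> n"
    then have Un: "saturated n U" and Vn: "saturated n V" using U V saturated_mono by blast+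
    have "AE q in PM. \<bar>Av n (indicator (U \<times> V)) q - indicator (U \<times> V) q\<bar> = 0"
      using AE_fstI[OF AE_cell_pos] AE_sndI[OF AE_cell_pos] AE_space
    proof eventually_elim
      case (elim q)
      then have sp: "fst q \<in> space M" "snd q \<in> space M" by (auto simp: space_pair_measure)
      let ?C = "cell n (fst q)" and ?D = "cell n (snd q)"
      have int_eq: "(\<integral>r. indicator (?C \<times> ?D) r * indicator (U \<times> V) r \<partial>PM) = measure PM ((?C \<times> ?D) \<inter> (U \<times> V))"
        by (simp add: indicator_inter_arith[symmetric])
      have mCD: "measure PM (?C \<times> ?D) = measure M ?C * measure M ?D" by (simp add: measure_PM_Times)
      show ?case
      proof (cases "q \<in> U \<times> V")
        case True
        then have "?C \<subseteq> U" "?D \<subseteq> V" using Un Vn by (auto simp: saturated_def mem_Times_iff)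
        then have "(?C \<times> ?D) \<inter> (U \<times> V) = ?C \<times> ?D" by auto
        then show ?thesis using True elim int_eq mCD by (simp add: Av_def coef_def)
      next
        case False
        then have "?C \<inter> U = {} \<or> ?D \<inter> V = {}"
          using saturated_disj[OF Un sp(1)] saturated_disj[OF Vn sp(2)] by (auto simp: mem_Times_iff)
        then have "(?C \<times> ?D) \<inter> (U \<times> V) = {}" by auto
        then show ?thesis using False int_eq by (simp add: Av_def coef_def)
      qed
    qed
    then show "(\<integral>q. \<bar>Av n (indicator (U \<times> V)) q - indicator (U \<times> V) q\<bar> \<partial>PM) = 0"
      by (rule integral_eq_zero_AE)
  qed
  then have "(\<lambda>n. \<integral>q. \<bar>Av n (indicator (U \<times> V)) q - indicator (U \<times> V) q\<bar> \<partial>PM) \<longlonglongrightarrow> 0"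
    by (rule tendsto_eventually)
  moreover have "integrable PM (indicator (U \<times> V) :: _ \<Rightarrow> real)"
    by (simp add: integrable_indicator_iff PP.emeasure_finite less_top[symmetric])
  ultimately show ?thesis by (simp add: conv_def)
qed

end

locale gencellsys = cellsys +
  assumes GEN: "\<And>S e. S \<in> sets M \<Longrightarrow> 0 < e \<Longrightarrow> \<exists>n U. saturated n U \<and> measure M (sym_diff S U) < e"
begin

lemma conv_rect:
  assumes S: "S \<in> sets M" and T: "T \<in> sets M"
  shows "conv (indicator (S \<times> T))"
proof -
  have "\<exists>N U V. saturated N U \<and> saturated N V \<and> measure M (sym_diff S U) < 1/Suc m \<and> measure M (sym_diff T V) < 1/Suc m" for m
  proof -
    obtain n1 U where U: "saturated n1 U" "measure M (sym_diff S U) < 1/Suc m" using GEN[OF S, of "1/Suc m"] by auto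
    obtain n2 V where V: "saturated n2 V" "measure M (sym_diff T V) < 1/Suc m" using GEN[OF T, of "1/Suc m"] by auto
    show ?thesis
      by (rule exI[of _ "max n1 n2"], rule exI[of _ U], rule exI[of _ V])
         (use U V saturated_mono in auto)
  qed
  then obtain N U V where UV: "\<And>m. saturated (N m) (U m)" "\<And>m. saturated (N m) (V m)"
    "\<And>m. measure M (sym_diff S (U m)) < 1/Suc m" "\<And>m. measure M (sym_diff T (V m)) < 1/Suc m"
    by metis
  have Um[measurable]: "U m \<in> sets M" "V m \<in> sets M" for m using UV by (auto simp: saturated_def)
  show ?thesis
  proof (rule conv_close[of _ "\<lambda>m. indicator (U m \<times> V m)"])
    show "integrable PM (indicator (S \<times> T) :: _ \<Rightarrow> real)"
      using S T by (simp add: integrable_indicator_iff PP.emeasure_finite less_top[symmetric] pair_measureI)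
    show "conv (indicator (U m \<times> V m))" for m by (rule conv_sat_rect[OF UV(1,2)])
    have bnd: "(\<integral>q. \<bar>indicator (S \<times> T) q - indicator (U m \<times> V m) q\<bar> \<partial>PM) \<le> (2 / Suc m :: real)" for m
    proof -
      have SU[measurable]: "sym_diff S (U m) \<in> sets M" and TV[measurable]: "sym_diff T (V m) \<in> sets M" using S T by auto
      have "(\<integral>q. \<bar>indicator (S \<times> T) q - indicator (U m \<times> V m) q\<bar> \<partial>PM) 
          \<le> (\<integral>q. indicator (sym_diff S (U m) \<times> space M) q + indicator (space M \<times> sym_diff T (V m)) q \<partial>PM :: real)"
      proof (rule Bochner_Integration.integral_mono)
        have fin: "\<And>A. A \<in> sets PM \<Longrightarrow> integrable PM (indicator A :: _ \<Rightarrow> real)"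
          by (simp add: integrable_indicator_iff PP.emeasure_finite less_top[symmetric])
        show "integrable PM (\<lambda>q. \<bar>indicator (S \<times> T) q - indicator (U m \<times> V m) q :: real\<bar>)"
          using S T by (intro integrable_abs Bochner_Integration.integrable_diff fin pair_measureI) auto
        show "integrable PM (\<lambda>q. indicator (sym_diff S (U m) \<times> space M) q + indicator (space M \<times> sym_diff T (V m)) q :: real)"
          using S T by (intro Bochner_Integration.integrable_add fin pair_measureI) auto
        show "\<bar>indicator (S \<times> T) q - indicator (U m \<times> V m) q\<bar> \<le> indicator (sym_diff S (U m) \<times> space M) q + (indicator (space M \<times> sym_diff T (V m)) q :: real)"
          if "q \<in> space PM" for q
          using that by (auto simp: indicator_def space_pair_measure)
      qed
      also have "\<dots> = measure M (sym_diff S (U m)) + measure M (sym_diff T (V m))"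
        by (simp add: integrable_indicator_iff PP.emeasure_finite less_top[symmetric] pair_measureI measure_PM_Times prob_space)
      also have "\<dots> \<le> 2 / Suc m" using UV(3,4)[of m] by simp
      finally show ?thesis .
    qed
    show "(\<lambda>m. \<integral>q. \<bar>indicator (S \<times> T) q - indicator (U m \<times> V m) q\<bar> \<partial>PM) \<longlonglongrightarrow> (0::real)"
    proof -
      have lim2: "(\<lambda>m. 2 / real (Suc m)) \<longlonglongrightarrow> 0"
        using LIMSEQ_Suc[OF lim_const_over_n[of 2]] by simp
      show ?thesis
        by (rule real_tendsto_sandwich[OF _ _ tendsto_const lim2]) (use bnd in auto)
    qed
  qed
qed

lemma conv_space: "conv (indicator (space M \<times> space M))"
  by (rule conv_rect) auto

lemma conv_zero: "conv (\<lambda>q. 0)"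
  using conv_cmult[OF conv_space, of 0] by simp

lemma conv_set:
  assumes A: "A \<in> sets PM"
  shows "conv (indicator A)"
proof -
  have "A \<in> sigma_sets (space M \<times> space M) {a \<times> b | a b. a \<in> sets M \<and> b \<in> sets M}"
    using A by (simp add: sets_pair_measure)
  then show ?thesis
  proof (induction rule: sigma_sets_induct_disjoint[OF Int_stable_pair_measure_generator pair_measure_closed, consumes 1, case_names basic empty compl union])
    case (basic A)
    then show ?case by (auto intro: conv_rect)
  next
    case empty
    then show ?case using conv_zero by simp
  next
    case (compl A)
    have "A \<subseteq> space M \<times> space M" using compl(1)
      by (metis sets.sets_into_space sets_pair_measure space_pair_measure)
    then have eq: "\<And>q. q \<in> space PM \<Longrightarrow> indicator (space M \<times> space M) q + (-1) * indicator A q = (indicator (space M \<times> space M - A) q :: real)"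
      by (auto simp: indicator_def space_pair_measure)
    show ?case
      by (rule conv_cong[OF conv_add[OF conv_space conv_cmult[OF compl(2)]] eq])
  next
    case (union A)
    have As[measurable]: "\<And>i. A i \<in> sets PM" using union(2) by (auto simp: sets_pair_measure)
    have sm: "conv (\<lambda>q. \<Sum>i<m. indicator (A i) q)" for m
    proof (induction m)
      case 0 then show ?case using conv_zero by simp
    next
      case (Suc m) then show ?case using conv_add[OF Suc union(3)[of m]] by (simp add: add.commute)
    qed
    have ind_eq: "(\<Sum>i<m. indicator (A i) q) = (indicator (\<Union>i<m. A i) q :: real)" for m q
      using union(1) by (intro indicator_UN_disjoint[symmetric]) (auto simp: disjoint_family_on_def)
    let ?B = "\<lambda>m. \<Union>i<m. A i"
    have Bs[measurable]: "?B m \<in> sets PM" for m by auto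
    have UB: "(\<Union>m. ?B m) = (\<Union>i. A i)" by auto
    have lim: "(\<lambda>m. measure PM (?B m)) \<longlonglongrightarrow> measure PM (\<Union>i. A i)"
    proof -
      have "range ?B \<subseteq> sets PM" by auto
      moreover have "incseq ?B" by (force simp: incseq_def)
      ultimately show ?thesis using Lim_measure_incseq[of ?B PM] UB by (simp add: PP.emeasure_finite)
    qed
    have eqm: "(\<integral>q. \<bar>indicator (\<Union>i. A i) q - (\<Sum>i<m. indicator (A i) q)\<bar> \<partial>PM) = measure PM (\<Union>i. A i) - measure PM (?B m)" for m
    proof -
      have "(\<integral>q. \<bar>indicator (\<Union>i. A i) q - (\<Sum>i<m. indicator (A i) q)\<bar> \<partial>PM) = (\<integral>q. indicator ((\<Union>i. A i) - ?B m) q \<partial>PM :: real)"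
        unfolding ind_eq by (intro Bochner_Integration.integral_cong refl) (auto simp: indicator_def)
      also have "\<dots> = measure PM ((\<Union>i. A i) - ?B m)" by simp
      also have "\<dots> = measure PM (\<Union>i. A i) - measure PM (?B m)"
        by (rule PP.finite_measure_Diff) auto
      finally show ?thesis .
    qed
    show ?case
    proof (rule conv_close[OF _ sm])
      show "integrable PM (indicator (\<Union>i. A i) :: _ \<Rightarrow> real)"
        by (simp add: integrable_indicator_iff PP.emeasure_finite less_top[symmetric])
      show "(\<lambda>m. \<integral>q. \<bar>indicator (\<Union>i. A i) q - (\<Sum>i<m. indicator (A i) q)\<bar> \<partial>PM) \<longlonglongrightarrow> (0::real)"
        unfolding eqm using tendsto_diff[OF tendsto_const lim, of "measure PM (\<Union>i. A i)"] by simp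
    qed
  qed
qed

lemma conv_all:
  fixes f :: "'a \<times> 'a \<Rightarrow> real"
  assumes "integrable PM f"
  shows "conv f"
  using assms
proof (induction rule: integrable_induct)
  case (base A c)
  show ?case
    by (rule conv_cong[OF conv_cmult[OF conv_set[OF base(1)], of c]]) (simp add: mult.commute)
next
  case (add f g)
  then show ?case using conv_add by blast
next
  case (lim f s)
  have l5: "integrable PM f" and l2: "\<And>i. conv (s i)" and l1: "\<And>i. integrable PM (s i)"
    and l3: "\<And>q. q \<in> space PM \<Longrightarrow> (\<lambda>i. s i q) \<longlonglongrightarrow> f q"
    and l4: "\<And>i q. q \<in> space PM \<Longrightarrow> norm (s i q) \<le> 2 * norm (f q)"
    using lim by blast+
  show ?case
  proof (rule conv_close[OF l5 l2])
    have [measurable]: "f \<in> borel_measurable PM" "\<And>i. s i \<in> borel_measurable PM" using l5 l1 by auto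
    have "(\<lambda>i. \<integral>q. \<bar>f q - s i q\<bar> \<partial>PM) \<longlonglongrightarrow> (\<integral>q. 0 \<partial>PM)"
    proof (rule integral_dominated_convergence[where w="\<lambda>q. 3 * \<bar>f q\<bar>"])
      show "integrable PM (\<lambda>q. 3 * \<bar>f q\<bar>)" using l5 by auto
      show "AE q in PM. (\<lambda>i. \<bar>f q - s i q\<bar>) \<longlonglongrightarrow> 0"
      proof (rule AE_I2)
        fix q assume "q \<in> space PM"
        then have "(\<lambda>i. s i q) \<longlonglongrightarrow> f q" by (rule l3)
        then have "(\<lambda>i. f q - s i q) \<longlonglongrightarrow> f q - f q" by (intro tendsto_diff tendsto_const)
        then show "(\<lambda>i. \<bar>f q - s i q\<bar>) \<longlonglongrightarrow> 0" using tendsto_rabs by fastforce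
      qed
      show "AE q in PM. norm \<bar>f q - s i q\<bar> \<le> 3 * \<bar>f q\<bar>" for i
      proof (rule AE_I2)
        fix q assume "q \<in> space PM"
        then have "\<bar>s i q\<bar> \<le> 2 * \<bar>f q\<bar>" using l4 by auto
        then show "norm \<bar>f q - s i q\<bar> \<le> 3 * \<bar>f q\<bar>" by simp
      qed
    qed auto
    then show "(\<lambda>i. \<integral>q. \<bar>f q - s i q\<bar> \<partial>PM) \<longlonglongrightarrow> 0" by simp
  qed
qed

lemma common_subseq:
  fixes F :: "nat \<Rightarrow> 'a \<times> 'a \<Rightarrow> real"
  assumes F: "\<And>i. integrable PM (F i)"
  shows "\<exists>s. strict_mono s \<and> (AE q in PM. \<forall>i. (\<lambda>m. Av (s m) (F i) q) \<longlonglongrightarrow> F i q)"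
proof -
  define Q where "Q i r \<longleftrightarrow> (AE q in PM. (\<lambda>m. Av (r m) (F i) q) \<longlonglongrightarrow> F i q)" for i and r :: "nat \<Rightarrow> nat"
  have stable: "Q n (s \<circ> r)" if "strict_mono r" "Q n s" for r s n
    using that(2) unfolding Q_def
  proof (elim AE_mp, intro AE_I2 impI)
    fix q assume "(\<lambda>m. Av (s m) (F n) q) \<longlonglongrightarrow> F n q"
    from LIMSEQ_subseq_LIMSEQ[OF this that(1)]
    show "(\<lambda>m. Av ((s \<circ> r) m) (F n) q) \<longlonglongrightarrow> F n q" by (simp add: o_def)
  qed
  interpret subseqs Q
  proof
    fix n and r :: "nat \<Rightarrow> nat" assume r: "strict_mono r"
    have c: "(\<lambda>m. \<integral>q. \<bar>Av m (F n) q - F n q\<bar> \<partial>PM) \<longlonglongrightarrow> 0" using conv_all[OF F] by (simp add: conv_def)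
    have "(\<lambda>m. \<integral>q. norm (Av (r m) (F n) q - F n q) \<partial>PM) \<longlonglongrightarrow> 0"
      using LIMSEQ_subseq_LIMSEQ[OF c r] by (simp add: o_def)
    from tendsto_L1_AE_subseq[OF _ this]
    obtain r' where r': "strict_mono r'" "AE q in PM. (\<lambda>m. Av (r (r' m)) (F n) q - F n q) \<longlonglongrightarrow> 0"
      using F Av_integrable by auto
    have "Q n (r \<circ> r')"
      unfolding Q_def using r'(2)
    proof (elim AE_mp, intro AE_I2 impI)
      fix q assume "(\<lambda>m. Av (r (r' m)) (F n) q - F n q) \<longlonglongrightarrow> 0"
      then have "(\<lambda>m. (Av (r (r' m)) (F n) q - F n q) + F n q) \<longlonglongrightarrow> 0 + F n q" by (intro tendsto_add tendsto_const)
      then show "(\<lambda>m. Av ((r \<circ> r') m) (F n) q) \<longlonglongrightarrow> F n q" by simp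
    qed
    then show "\<exists>r'. strict_mono r' \<and> Q n (r \<circ> r')" using r' by blast
  qed
  have "Q k diagseq" for k
  proof -
    have "Q k (diagseq \<circ> (+) (Suc k))" by (rule diagseq_holds) (rule stable)
    moreover have "(\<lambda>m. Av ((diagseq \<circ> (+) (Suc k)) m) (F k) q) \<longlonglongrightarrow> F k q \<longrightarrow> (\<lambda>m. Av (diagseq m) (F k) q) \<longlonglongrightarrow> F k q" for q
    proof
      assume "(\<lambda>m. Av ((diagseq \<circ> (+) (Suc k)) m) (F k) q) \<longlonglongrightarrow> F k q"
      then have "(\<lambda>m. Av (diagseq (m + Suc k)) (F k) q) \<longlonglongrightarrow> F k q" by (simp add: o_def add.commute)
      then show "(\<lambda>m. Av (diagseq m) (F k) q) \<longlonglongrightarrow> F k q" by (rule LIMSEQ_offset)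
    qed
    ultimately show ?thesis unfolding Q_def by (auto elim: AE_mp)
  qed
  then show ?thesis using subseq_diagseq unfolding Q_def by (auto simp: AE_all_countable)
qed

end

context cellsys
begin

lemma bint: "f \<in> borel_measurable M \<Longrightarrow> (\<And>x. x \<in> space M \<Longrightarrow> \<bar>f x\<bar> \<le> K) \<Longrightarrow> integrable M (f :: 'a \<Rightarrow> real)"
  by (rule integrable_const_bound[where B=K]) auto

lemma bintP: "f \<in> borel_measurable PM \<Longrightarrow> (\<And>x. x \<in> space PM \<Longrightarrow> \<bar>f x\<bar> \<le> K) \<Longrightarrow> integrable PM (f :: 'a \<times> 'a \<Rightarrow> real)"
  by (rule PP.integrable_const_bound[where B=K]) auto

lemma ind_integrable[intro, simp]: "A \<in> sets M \<Longrightarrow> integrable M (indicator A :: _ \<Rightarrow> real)"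
  by (simp add: integrable_indicator_iff emeasure_finite less_top[symmetric] Int_absorb2 sets.sets_into_space)

lemma ind_int: "A \<in> sets M \<Longrightarrow> (\<integral>y. indicator A y * c \<partial>M) = measure M A * (c::real)"
  by simp

lemma sect_int:
  fixes r :: "'a \<times> 'a \<Rightarrow> real"
  assumes r[measurable]: "r \<in> borel_measurable PM" and b: "\<And>q. \<bar>r q\<bar> \<le> K"
    and C[measurable]: "C \<in> sets M" and D[measurable]: "D \<in> sets M"
  shows "(\<integral>x. indicator C x * (\<integral>z. indicator D z * r (x, z) \<partial>M) \<partial>M) = (\<integral>q. indicator (C \<times> D) q * r q \<partial>PM)"
proof -
  have K: "0 \<le> K" using b[of undefined] by linarith
  have "integrable PM (\<lambda>q. indicator (C \<times> D) q * r q)"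
    by (rule bintP[where K=K]) (auto simp: b K indicator_def abs_mult)
  from PP.integral_fst'[OF this]
  have "(\<integral>x. (\<integral>z. indicator (C \<times> D) (x, z) * r (x, z) \<partial>M) \<partial>M) = (\<integral>q. indicator (C \<times> D) q * r q \<partial>PM)" .
  moreover have "(\<integral>z. indicator (C \<times> D) (x, z) * r (x, z) \<partial>M) = indicator C x * (\<integral>z. indicator D z * r (x, z) \<partial>M)" for x
    by (simp add: indicator_times mult.assoc)
  ultimately show ?thesis by simp
qed

lemma tri_int:
  fixes r :: "'a \<times> 'a \<Rightarrow> real"
  assumes r[measurable]: "r \<in> borel_measurable PM" and nn: "\<And>q. 0 \<le> r q" and b: "\<And>q. r q \<le> K"
    and tri: "AE x in M. AE y in M. AE z in M. r (x, z) \<le> r (x, y) + r (y, z)"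
    and C[measurable]: "C \<in> sets M" and B[measurable]: "B \<in> sets M" and D[measurable]: "D \<in> sets M"
  shows "measure M B * (\<integral>q. indicator (C \<times> D) q * r q \<partial>PM)
     \<le> measure M D * (\<integral>q. indicator (C \<times> B) q * r q \<partial>PM) + measure M C * (\<integral>q. indicator (B \<times> D) q * r q \<partial>PM)"
proof -
  have K: "0 \<le> K" using nn[of undefined] b[of undefined] by linarith
  have ab: "\<And>q. \<bar>r q\<bar> \<le> K" using nn b by (simp add: abs_of_nonneg)
  define g1 where "g1 x = (\<integral>z. indicator D z * r (x, z) \<partial>M)" for x
  define g2 where "g2 x = (\<integral>y. indicator B y * r (x, y) \<partial>M)" for x
  define h where "h y = (\<integral>z. indicator D z * r (y, z) \<partial>M)" for y
  have [measurable]: "g1 \<in> borel_measurable M" "g2 \<in> borel_measurable M" "h \<in> borel_measurable M"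
    unfolding g1_def g2_def h_def by measurable
  have intz: "integrable M (\<lambda>z. indicator D z * r (x, z))" if "x \<in> space M" for x
    using that by (intro bint[where K=K]) (auto simp: ab K indicator_def)
  have intz2: "integrable M (\<lambda>z. indicator B z * r (x, z))" if "x \<in> space M" for x
    using that by (intro bint[where K=K]) (auto simp: ab K indicator_def)
  have g1b: "\<bar>g1 x\<bar> \<le> K" for x
  proof -
    have "\<bar>g1 x\<bar> \<le> (\<integral>z. \<bar>indicator D z * r (x, z)\<bar> \<partial>M)" unfolding g1_def
      using integral_norm_bound[of M "\<lambda>z. indicator D z * r (x, z)"] by simp
    also have "\<dots> \<le> (\<integral>z. K \<partial>M)"
      by (intro integral_mono_AE' AE_I2) (auto simp: ab K indicator_def abs_mult)
    also have "\<dots> = K" by (simp add: prob_space)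
    finally show ?thesis .
  qed
  have g2b: "\<bar>g2 x\<bar> \<le> K" for x
  proof -
    have "\<bar>g2 x\<bar> \<le> (\<integral>z. \<bar>indicator B z * r (x, z)\<bar> \<partial>M)" unfolding g2_def
      using integral_norm_bound[of M "\<lambda>z. indicator B z * r (x, z)"] by simp
    also have "\<dots> \<le> (\<integral>z. K \<partial>M)"
      by (intro integral_mono_AE' AE_I2) (auto simp: ab K indicator_def abs_mult)
    also have "\<dots> = K" by (simp add: prob_space)
    finally show ?thesis .
  qed
  have hb: "\<bar>h x\<bar> \<le> K" for x using g1b[of x] by (simp add: g1_def h_def)
  have s1: "g1 x \<le> measure M D * r (x, y) + h y"
    if x: "x \<in> space M" and y: "y \<in> space M" and az: "AE z in M. r (x, z) \<le> r (x, y) + r (y, z)" for x y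
  proof -
      have "g1 x \<le> (\<integral>z. indicator D z * r (x, y) + indicator D z * r (y, z) \<partial>M)"
        unfolding g1_def
      proof (rule integral_mono_AE)
        show "integrable M (\<lambda>z. indicator D z * r (x, z))" by (rule intz[OF x])
        show "integrable M (\<lambda>z. indicator D z * r (x, y) + indicator D z * r (y, z))"
          using intz[OF y] by (intro Bochner_Integration.integrable_add) auto
        show "AE z in M. indicator D z * r (x, z) \<le> indicator D z * r (x, y) + indicator D z * r (y, z)"
          using az by eventually_elim (auto simp: indicator_def)
      qed
      also have "\<dots> = measure M D * r (x, y) + h y"
        unfolding h_def using intz[OF y] by (subst Bochner_Integration.integral_add) auto
      finally show "g1 x \<le> measure M D * r (x, y) + h y" .
  qed
  have step1: "AE x in M. AE y in M. g1 x \<le> measure M D * r (x, y) + h y"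
  proof (rule AE_mp[OF tri AE_I2], rule impI)
    fix x assume x: "x \<in> space M" and ax: "AE y in M. AE z in M. r (x, z) \<le> r (x, y) + r (y, z)"
    show "AE y in M. g1 x \<le> measure M D * r (x, y) + h y"
      by (rule AE_mp[OF ax AE_I2]) (use s1[OF x] in blast)
  qed
  have step2: "AE x in M. measure M B * g1 x \<le> measure M D * g2 x + (\<integral>y. indicator B y * h y \<partial>M)"
  proof (rule AE_mp[OF step1 AE_I2], rule impI)
    fix x assume x: "x \<in> space M" and ay: "AE y in M. g1 x \<le> measure M D * r (x, y) + h y"
    have "measure M B * g1 x = (\<integral>y. indicator B y * g1 x \<partial>M)" by simp
    also have "\<dots> \<le> (\<integral>y. indicator B y * (measure M D * r (x, y)) + indicator B y * h y \<partial>M)"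
    proof (rule integral_mono_AE)
      show "integrable M (\<lambda>y. indicator B y * g1 x)" by simp
      show "integrable M (\<lambda>y. indicator B y * (measure M D * r (x, y)) + indicator B y * h y)"
      proof (intro Bochner_Integration.integrable_add)
        show "integrable M (\<lambda>y. indicator B y * (measure M D * r (x, y)))"
          using integrable_mult_right[OF intz2[OF x], of "measure M D"] by (simp add: ac_simps)
        show "integrable M (\<lambda>y. indicator B y * h y)"
          by (intro bint[where K=K]) (auto simp: hb K indicator_def abs_mult)
      qed
      show "AE y in M. indicator B y * g1 x \<le> indicator B y * (measure M D * r (x, y)) + indicator B y * h y"
        using ay by eventually_elim (auto simp: indicator_def)
    qed
    also have "\<dots> = measure M D * g2 x + (\<integral>y. indicator B y * h y \<partial>M)"
    proof (subst Bochner_Integration.integral_add)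
      show "integrable M (\<lambda>y. indicator B y * (measure M D * r (x, y)))"
        using integrable_mult_right[OF intz2[OF x], of "measure M D"] by (simp add: ac_simps)
      show "integrable M (\<lambda>y. indicator B y * h y)"
        by (intro bint[where K=K]) (auto simp: hb K indicator_def abs_mult)
      show "(\<integral>y. indicator B y * (measure M D * r (x, y)) \<partial>M) + (\<integral>y. indicator B y * h y \<partial>M) = measure M D * g2 x + (\<integral>y. indicator B y * h y \<partial>M)"
      proof -
        have "(\<integral>y. indicator B y * (measure M D * r (x, y)) \<partial>M) = (\<integral>y. measure M D * (indicator B y * r (x, y)) \<partial>M)"
          by (intro Bochner_Integration.integral_cong refl) (simp add: mult.left_commute)
        then show ?thesis unfolding g2_def by simp
      qed
    qed
    finally show "measure M B * g1 x \<le> measure M D * g2 x + (\<integral>y. indicator B y * h y \<partial>M)" .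
  qed
  let ?c = "(\<integral>y. indicator B y * h y \<partial>M)"
  have "(\<integral>x. indicator C x * (measure M B * g1 x) \<partial>M) = (\<integral>x. measure M B * (indicator C x * g1 x) \<partial>M)"
    by (intro Bochner_Integration.integral_cong refl) (simp add: mult.left_commute)
  then have "measure M B * (\<integral>x. indicator C x * g1 x \<partial>M) = (\<integral>x. indicator C x * (measure M B * g1 x) \<partial>M)"
    by simp
  also have "\<dots> \<le> (\<integral>x. indicator C x * (measure M D * g2 x) + indicator C x * ?c \<partial>M)"
  proof (rule integral_mono_AE)
    show "integrable M (\<lambda>x. indicator C x * (measure M B * g1 x))"
      by (intro bint[where K="measure M B * K"])
         (auto simp: indicator_def abs_mult K intro!: mult_left_mono g1b)
    have "integrable M (\<lambda>x. indicator C x * (measure M D * g2 x))"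
      by (intro bint[where K="measure M D * K"])
         (auto simp: indicator_def abs_mult K intro!: mult_left_mono g2b)
    then show "integrable M (\<lambda>x. indicator C x * (measure M D * g2 x) + indicator C x * ?c)"
      by (intro Bochner_Integration.integrable_add) auto
    show "AE x in M. indicator C x * (measure M B * g1 x) \<le> indicator C x * (measure M D * g2 x) + indicator C x * ?c"
      using step2 by eventually_elim (auto simp: indicator_def)
  qed
  also have "\<dots> = measure M D * (\<integral>x. indicator C x * g2 x \<partial>M) + measure M C * ?c"
  proof (subst Bochner_Integration.integral_add)
    show "integrable M (\<lambda>x. indicator C x * (measure M D * g2 x))"
      by (intro bint[where K="measure M D * K"])
         (auto simp: indicator_def abs_mult K intro!: mult_left_mono g2b)
    show "integrable M (\<lambda>x. indicator C x * ?c)" by simp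
    have "(\<integral>x. indicator C x * (measure M D * g2 x) \<partial>M) = (\<integral>x. measure M D * (indicator C x * g2 x) \<partial>M)"
      by (intro Bochner_Integration.integral_cong refl) (simp add: mult.left_commute)
    then show "(\<integral>x. indicator C x * (measure M D * g2 x) \<partial>M) + (\<integral>x. indicator C x * ?c \<partial>M) = measure M D * (\<integral>x. indicator C x * g2 x \<partial>M) + measure M C * ?c"
      by simp
  qed
  finally have main: "measure M B * (\<integral>x. indicator C x * g1 x \<partial>M) \<le> measure M D * (\<integral>x. indicator C x * g2 x \<partial>M) + measure M C * ?c" .
  have e1: "(\<integral>x. indicator C x * g1 x \<partial>M) = (\<integral>q. indicator (C \<times> D) q * r q \<partial>PM)"
    unfolding g1_def by (rule sect_int[OF r ab C D])
  have e2: "(\<integral>x. indicator C x * g2 x \<partial>M) = (\<integral>q. indicator (C \<times> B) q * r q \<partial>PM)"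
    unfolding g2_def by (rule sect_int[OF r ab C B])
  have e3: "?c = (\<integral>q. indicator (B \<times> D) q * r q \<partial>PM)"
    unfolding h_def by (rule sect_int[OF r ab B D])
  show ?thesis using main e1 e2 e3 by simp
qed

lemma Av_tri:
  fixes r :: "'a \<times> 'a \<Rightarrow> real"
  assumes r[measurable]: "r \<in> borel_measurable PM" and nn: "\<And>q. 0 \<le> r q" and b: "\<And>q. r q \<le> K"
    and tri: "AE x in M. AE y in M. AE z in M. r (x, z) \<le> r (x, y) + r (y, z)"
    and px: "measure M (cell n x) \<noteq> 0" and py: "measure M (cell n y) \<noteq> 0" and pz: "measure M (cell n z) \<noteq> 0"
  shows "Av n r (x, z) \<le> Av n r (x, y) + Av n r (y, z)"
proof -
  let ?C = "cell n x" and ?B = "cell n y" and ?D = "cell n z"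
  let ?I = "\<lambda>C D. (\<integral>q. indicator (C \<times> D) q * r q \<partial>PM)"
  have main: "measure M ?B * ?I ?C ?D \<le> measure M ?D * ?I ?C ?B + measure M ?C * ?I ?B ?D"
    by (rule tri_int[OF r nn b tri]) auto
  have pos: "0 < measure M ?C" "0 < measure M ?B" "0 < measure M ?D"
    using px py pz by (auto simp: zero_less_measure_iff measure_nonneg order_le_less)
  have "Av n r (x, z) = ?I ?C ?D / (measure M ?C * measure M ?D)" by (simp add: Av_def coef_def)
  also have "\<dots> = (measure M ?B * ?I ?C ?D) / (measure M ?C * measure M ?B * measure M ?D)"
    using pos by (simp add: field_simps)
  also have "\<dots> \<le> (measure M ?D * ?I ?C ?B + measure M ?C * ?I ?B ?D) / (measure M ?C * measure M ?B * measure M ?D)"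
    using pos main by (intro divide_right_mono) auto
  also have "\<dots> = ?I ?C ?B / (measure M ?C * measure M ?B) + ?I ?B ?D / (measure M ?B * measure M ?D)"
    using pos by (simp add: field_simps)
  also have "\<dots> = Av n r (x, y) + Av n r (y, z)" by (simp add: Av_def coef_def)
  finally show ?thesis .
qed

lemma Av_nonneg:
  fixes r :: "'a \<times> 'a \<Rightarrow> real"
  assumes "\<And>q. 0 \<le> r q"
  shows "0 \<le> Av n r p"
proof -
  have "0 \<le> (\<integral>q. indicator (cell n (fst p) \<times> cell n (snd p)) q * r q \<partial>PM)"
    using assms by (intro integral_nonneg_AE AE_I2) auto
  then show ?thesis by (simp add: Av_def coef_def)
qed

lemma AE_swap:
  assumes "AE q in PM. P q"
  shows "AE q in PM. P (snd q, fst q)"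
proof -
  obtain N where N: "N \<in> sets PM" "emeasure PM N = 0" "{q\<in>space PM. \<not> P q} \<subseteq> N"
    using assms by (auto simp: eventually_ae_filter null_sets_def)
  let ?N' = "(\<lambda>(x, y). (y, x)) -` N \<inter> space PM"
  have N'[measurable]: "?N' \<in> sets PM"
    using measurable_pair_swap'[of M M] N(1) by (rule measurable_sets)
  have "emeasure PM N = emeasure (distr PM PM (\<lambda>(x, y). (y, x))) N"
    by (subst PP.distr_pair_swap[symmetric]) rule
  also have "\<dots> = emeasure PM ?N'"
    using N(1) by (rule emeasure_distr[OF measurable_pair_swap'])
  finally have "?N' \<in> null_sets PM" using N(2) N' by (simp add: null_sets_def)
  moreover have "{q\<in>space PM. \<not> P (snd q, fst q)} \<subseteq> ?N'"
    using N(3) by (auto simp: space_pair_measure)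
  ultimately show ?thesis unfolding eventually_ae_filter by blast
qed

end

lemma AE3_mono:
  assumes "AE x in M. AE y in M. AE z in M. P x y z" "\<And>x y z. P x y z \<Longrightarrow> Q x y z"
  shows "AE x in M. AE y in M. AE z in M. Q x y z"
  using assms by (auto elim!: eventually_mono)

lemma SUP_min_nat: "0 \<le> (a::real) \<Longrightarrow> (SUP k::nat. ereal (min a (real k))) = ereal a"
proof (rule antisym)
  assume a: "0 \<le> a"
  show "(SUP k::nat. ereal (min a (real k))) \<le> ereal a" by (rule SUP_least) auto
  obtain k :: nat where "a \<le> real k" using real_arch_simple by blast
  then have "ereal a = ereal (min a (real k))" by simp
  also have "\<dots> \<le> (SUP k::nat. ereal (min a (real k)))" by (rule SUP_upper) auto
  finally show "ereal a \<le> (SUP k::nat. ereal (min a (real k)))" .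
qed

locale msetting = gencellsys M E for M :: "'a measure" and E +
  fixes r :: "'a \<times> 'a \<Rightarrow> real" and H :: "nat \<Rightarrow> 'a set"
  assumes r_meas[measurable]: "r \<in> borel_measurable PM"
    and r_nn: "\<And>q. 0 \<le> r q"
    and r_sym: "AE q in PM. r (snd q, fst q) = r q"
    and r_tri: "AE x in M. AE y in M. AE z in M. r (x, z) \<le> r (x, y) + r (y, z)"
    and diag: "AE q in PM. fst q \<noteq> snd q"
    and H_sets[measurable]: "\<And>i. H i \<in> sets M"
begin

definition g :: "nat \<Rightarrow> 'a \<times> 'a \<Rightarrow> real" where
  "g k q = min (r q) (real k)"

lemma g_meas[measurable]: "g k \<in> borel_measurable PM"
  unfolding g_def by measurable

lemma g_nn: "0 \<le> g k q" and g_le: "g k q \<le> real k" and g_le_r: "g k q \<le> r q"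
  using r_nn[of q] by (auto simp: g_def)

lemma g_tri: "AE x in M. AE y in M. AE z in M. g k (x, z) \<le> g k (x, y) + g k (y, z)"
  using r_tri
proof (rule AE3_mono)
  fix x y z assume "r (x, z) \<le> r (x, y) + r (y, z)"
  then show "g k (x, z) \<le> g k (x, y) + g k (y, z)"
    using r_nn[of "(x,y)"] r_nn[of "(y,z)"] by (auto simp: g_def min_def)
qed

definition F :: "nat \<Rightarrow> 'a \<times> 'a \<Rightarrow> real" where
  "F n = (if even n then g (n div 2) else indicator (H (n div 2) \<times> space M))"

lemma F_int: "integrable PM (F n)"
proof (cases "even n")
  case True
  then show ?thesis unfolding F_def
    by (auto intro!: bintP[where K="real (n div 2)"] simp: g_nn g_le abs_of_nonneg)
next
  case False
  then show ?thesis unfolding F_def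
    by (simp add: integrable_indicator_iff PP.emeasure_finite less_top[symmetric] pair_measureI)
qed

definition sq :: "nat \<Rightarrow> nat" where
  "sq = (SOME s. strict_mono s \<and> (AE q in PM. \<forall>i. (\<lambda>m. Av (s m) (F i) q) \<longlonglongrightarrow> F i q))"

lemma sq: "strict_mono sq" "AE q in PM. \<forall>i. (\<lambda>m. Av (sq m) (F i) q) \<longlonglongrightarrow> F i q"
proof -
  have "\<exists>s. strict_mono s \<and> (AE q in PM. \<forall>i. (\<lambda>m. Av (s m) (F i) q) \<longlonglongrightarrow> F i q)"
    by (rule common_subseq[OF F_int])
  then have "strict_mono sq \<and> (AE q in PM. \<forall>i. (\<lambda>m. Av (sq m) (F i) q) \<longlonglongrightarrow> F i q)"
    unfolding sq_def by (rule someI_ex)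
  then show "strict_mono sq" "AE q in PM. \<forall>i. (\<lambda>m. Av (sq m) (F i) q) \<longlonglongrightarrow> F i q" by auto
qed

definition L :: "nat \<Rightarrow> 'a \<times> 'a \<Rightarrow> ereal" where
  "L k q = limsup (\<lambda>m. ereal (Av (sq m) (g k) q))"

definition rho1 :: "'a \<times> 'a \<Rightarrow> ereal" where
  "rho1 q = (SUP k. L k q)"

definition Xp :: "'a set" where
  "Xp = {x \<in> space M. \<forall>n. measure M (cell n x) \<noteq> 0}"

lemma AE_Xp: "AE x in M. x \<in> Xp"
  using AE_cell_pos by (auto simp: Xp_def elim!: eventually_mono)

lemma L_nn: "0 \<le> L k q"
proof -
  have "limsup (\<lambda>m. ereal 0) \<le> L k q"
    unfolding L_def by (intro Limsup_mono always_eventually allI) (simp add: Av_nonneg g_nn)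
  then show ?thesis by (simp add: Limsup_const zero_ereal_def)
qed

lemma rho1_nn: "0 \<le> rho1 q"
  unfolding rho1_def using L_nn by (meson SUP_upper2 UNIV_I)

lemma L_tri:
  assumes "x \<in> Xp" "y \<in> Xp" "z \<in> Xp"
  shows "L k (x, z) \<le> L k (x, y) + L k (y, z)"
proof -
  have "\<And>m. Av (sq m) (g k) (x, z) \<le> Av (sq m) (g k) (x, y) + Av (sq m) (g k) (y, z)"
    using assms by (intro Av_tri[OF g_meas g_nn g_le g_tri]) (auto simp: Xp_def)
  then have "L k (x, z) \<le> limsup (\<lambda>m. ereal (Av (sq m) (g k) (x, y)) + ereal (Av (sq m) (g k) (y, z)))"
    unfolding L_def by (intro Limsup_mono always_eventually allI) simp
  also have "\<dots> \<le> L k (x, y) + L k (y, z)"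
    unfolding L_def by (rule ereal_limsup_add_mono)
  finally show ?thesis .
qed

lemma rho1_tri:
  assumes "x \<in> Xp" "y \<in> Xp" "z \<in> Xp"
  shows "rho1 (x, z) \<le> rho1 (x, y) + rho1 (y, z)"
  unfolding rho1_def
proof (rule SUP_least)
  fix k
  have "L k (x, z) \<le> L k (x, y) + L k (y, z)" by (rule L_tri[OF assms])
  also have "\<dots> \<le> (SUP k. L k (x, y)) + (SUP k. L k (y, z))"
    by (intro add_mono SUP_upper) auto
  finally show "L k (x, z) \<le> (SUP k. L k (x, y)) + (SUP k. L k (y, z))" .
qed

lemma rho1_ae: "AE q in PM. rho1 q = ereal (r q)"
  using sq(2)
proof (rule eventually_mono)
  fix q assume c: "\<forall>i. (\<lambda>m. Av (sq m) (F i) q) \<longlonglongrightarrow> F i q"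
  have "L k q = ereal (g k q)" for k
  proof -
    have "(\<lambda>m. Av (sq m) (F (2 * k)) q) \<longlonglongrightarrow> F (2 * k) q" using c by blast
    then have "(\<lambda>m. ereal (Av (sq m) (g k) q)) \<longlonglongrightarrow> ereal (g k q)"
      by (simp add: F_def)
    then show ?thesis unfolding L_def by (intro lim_imp_Limsup) auto
  qed
  then have "rho1 q = (SUP k. ereal (min (r q) (real k)))" by (simp add: rho1_def g_def)
  also have "\<dots> = ereal (r q)" by (rule SUP_min_nat[OF r_nn])
  finally show "rho1 q = ereal (r q)" .
qed

definition rho2 :: "'a \<Rightarrow> 'a \<Rightarrow> ereal" where
  "rho2 x y = max (rho1 (x, y)) (rho1 (y, x))"

lemma rho2_sym: "rho2 x y = rho2 y x"
  by (simp add: rho2_def max.commute)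

lemma rho2_nn: "0 \<le> rho2 x y"
  by (simp add: rho2_def rho1_nn le_max_iff_disj)

lemma rho2_tri:
  assumes "x \<in> Xp" "y \<in> Xp" "z \<in> Xp"
  shows "rho2 x z \<le> rho2 x y + rho2 y z"
proof -
  have "rho1 (x, z) \<le> rho2 x y + rho2 y z"
    using rho1_tri[OF assms] by (rule order_trans) (intro add_mono, auto simp: rho2_def)
  moreover have "rho1 (z, x) \<le> rho2 x y + rho2 y z"
    using rho1_tri[OF assms(3,2,1)] by (rule order_trans) (subst add.commute, intro add_mono, auto simp: rho2_def)
  ultimately show ?thesis by (simp add: rho2_def)
qed

lemma rho2_ae: "AE q in PM. rho2 (fst q) (snd q) = ereal (r q)"
  using rho1_ae AE_swap[OF rho1_ae] r_sym
proof eventually_elim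
  case (elim q)
  then show ?case by (cases q) (simp add: rho2_def)
qed

definition dens :: "nat \<Rightarrow> 'a set \<Rightarrow> 'a \<Rightarrow> real" where
  "dens n A x = measure M (cell n x \<inter> A) / measure M (cell n x)"

lemma Av_ind:
  assumes A: "A \<in> sets M" and y: "measure M (cell n y) \<noteq> 0"
  shows "Av n (indicator (A \<times> space M)) (x, y) = dens n A x"
proof -
  let ?C = "cell n x" and ?D = "cell n y"
  have "(\<integral>q. indicator (?C \<times> ?D) q * indicator (A \<times> space M) q \<partial>PM) = measure PM ((?C \<inter> A) \<times> ?D)"
  proof -
    have "(?C \<times> ?D) \<inter> (A \<times> space M) = (?C \<inter> A) \<times> ?D" using cell_subset[of n y] by auto
    moreover have "(?C \<inter> A) \<times> ?D \<inter> space PM = (?C \<inter> A) \<times> ?D"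
      using cell_subset[of n x] cell_subset[of n y] by (auto simp: space_pair_measure)
    ultimately show ?thesis by (simp add: indicator_inter_arith[symmetric])
  qed
  also have "\<dots> = measure M (?C \<inter> A) * measure M ?D" using A by (simp add: measure_PM_Times)
  finally show ?thesis using y by (simp add: Av_def coef_def dens_def)
qed

lemma AE_dens: "AE x in M. x \<in> Xp \<and> (\<forall>i. x \<in> H i \<longrightarrow> (\<lambda>m. dens (sq m) (H i) x) \<longlonglongrightarrow> 1)"
proof -
  have "AE x in M. AE y in M. \<forall>i. (\<lambda>m. Av (sq m) (F i) (x, y)) \<longlonglongrightarrow> F i (x, y)"
    using PP.AE_pair[OF sq(2)] by simp
  then show ?thesis
    using AE_Xp
  proof eventually_elim
    case (elim x)
    have ae: "AE y in M. y \<in> Xp \<and> (\<forall>i. (\<lambda>m. Av (sq m) (F i) (x, y)) \<longlonglongrightarrow> F i (x, y))"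
      using elim(1) AE_Xp by eventually_elim auto
    have "\<exists>y. y \<in> Xp \<and> (\<forall>i. (\<lambda>m. Av (sq m) (F i) (x, y)) \<longlonglongrightarrow> F i (x, y))"
    proof (rule ccontr)
      assume "\<not> ?thesis"
      then have "AE y in M. False" using ae by (rule_tac eventually_mono[OF ae]) blast
      then show False using AE_False by simp
    qed
    then obtain y where y: "y \<in> Xp" "\<And>i. (\<lambda>m. Av (sq m) (F i) (x, y)) \<longlonglongrightarrow> F i (x, y)"
      by blast
    have "(\<lambda>m. dens (sq m) (H i) x) \<longlonglongrightarrow> 1" if "x \<in> H i" for i
    proof -
      have "(\<lambda>m. Av (sq m) (F (Suc (2 * i))) (x, y)) \<longlonglongrightarrow> F (Suc (2 * i)) (x, y)" by (rule y(2))
      moreover have "F (Suc (2 * i)) = indicator (H i \<times> space M)" by (simp add: F_def)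
      moreover have "Av (sq m) (indicator (H i \<times> space M)) (x, y) = dens (sq m) (H i) x" for m
        using y(1) by (intro Av_ind) (auto simp: Xp_def)
      ultimately show ?thesis using that y(1) by (simp add: Xp_def indicator_def)
    qed
    then show ?case using elim(2) by auto
  qed
qed

lemma Av_bound:
  assumes A[measurable]: "A \<in> sets M" and e: "0 \<le> e"
    and AEb: "AE q in PM. fst q \<in> A \<longrightarrow> snd q \<in> A \<longrightarrow> r q \<le> e"
    and px: "measure M (cell n x) \<noteq> 0" and py: "measure M (cell n y) \<noteq> 0"
  shows "Av n (g k) (x, y) \<le> e + real k * (1 - dens n A x) + real k * (1 - dens n A y)"
proof -
  let ?C = "cell n x" and ?D = "cell n y"
  have pos: "0 < measure M ?C" "0 < measure M ?D"
    using px py by (auto simp: zero_less_measure_iff measure_nonneg order_le_less)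
  have "(\<integral>q. indicator (?C \<times> ?D) q * g k q \<partial>PM)
      \<le> (\<integral>q. e * indicator (?C \<times> ?D) q + real k * indicator ((?C - A) \<times> ?D) q + real k * indicator (?C \<times> (?D - A)) q \<partial>PM)"
  proof (rule integral_mono_AE)
    show "integrable PM (\<lambda>q. indicator (?C \<times> ?D) q * g k q)"
      by (intro int_ind F_int[of "2*k", unfolded F_def, simplified]) auto
    show "integrable PM (\<lambda>q. e * indicator (?C \<times> ?D) q + real k * indicator ((?C - A) \<times> ?D) q + real k * indicator (?C \<times> (?D - A)) q)"
      by (intro Bochner_Integration.integrable_add integrable_mult_right)
         (auto simp: integrable_indicator_iff PP.emeasure_finite less_top[symmetric] pair_measureI)
    show "AE q in PM. indicator (?C \<times> ?D) q * g k q \<le> e * indicator (?C \<times> ?D) q + real k * indicator ((?C - A) \<times> ?D) q + real k * indicator (?C \<times> (?D - A)) q"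
      using AEb
    proof eventually_elim
      case (elim q)
      show ?case
      proof (cases "q \<in> ?C \<times> ?D")
        case True
        show ?thesis
        proof (cases "fst q \<in> A \<and> snd q \<in> A")
          case True
          then have "g k q \<le> e" using elim g_le_r[of k q] by auto
          then show ?thesis using \<open>q \<in> ?C \<times> ?D\<close> True e by (auto simp: indicator_def)
        next
          case False
          then show ?thesis using \<open>q \<in> ?C \<times> ?D\<close> e g_le[of k q]
            by (cases q) (auto simp: indicator_def)
        qed
      next
        case False
        then show ?thesis using e by (auto simp: indicator_def)
      qed
    qed
  qed
  also have "\<dots> = e * (measure M ?C * measure M ?D) + real k * (measure M (?C - A) * measure M ?D) + real k * (measure M ?C * measure M (?D - A))"
    by (subst Bochner_Integration.integral_add, (auto simp: integrable_indicator_iff PP.emeasure_finite less_top[symmetric] pair_measureI)[2])+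
       (simp add: measure_PM_Times)
  finally have I: "(\<integral>q. indicator (?C \<times> ?D) q * g k q \<partial>PM) \<le> e * (measure M ?C * measure M ?D) + real k * (measure M (?C - A) * measure M ?D) + real k * (measure M ?C * measure M (?D - A))" .
  have dC: "measure M (?C - A) = measure M ?C - measure M (?C \<inter> A)"
    by (rule finite_measure_Diff') auto
  have dD: "measure M (?D - A) = measure M ?D - measure M (?D \<inter> A)"
    by (rule finite_measure_Diff') auto
  have "Av n (g k) (x, y) = (\<integral>q. indicator (?C \<times> ?D) q * g k q \<partial>PM) / (measure M ?C * measure M ?D)"
    by (simp add: Av_def coef_def)
  also have "\<dots> \<le> (e * (measure M ?C * measure M ?D) + real k * (measure M (?C - A) * measure M ?D) + real k * (measure M ?C * measure M (?D - A))) / (measure M ?C * measure M ?D)"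
    using pos I by (intro divide_right_mono) auto
  also have "\<dots> = e + real k * (1 - dens n A x) + real k * (1 - dens n A y)"
    using pos unfolding dC dD dens_def by (simp add: field_simps)
  finally show ?thesis .
qed

lemma rho1_bound:
  assumes A[measurable]: "A \<in> sets M" and e: "0 \<le> e"
    and AEb: "AE q in PM. fst q \<in> A \<longrightarrow> snd q \<in> A \<longrightarrow> r q \<le> e"
    and x: "x \<in> Xp" and y: "y \<in> Xp"
    and dx: "(\<lambda>m. dens (sq m) A x) \<longlonglongrightarrow> 1" and dy: "(\<lambda>m. dens (sq m) A y) \<longlonglongrightarrow> 1"
  shows "rho1 (x, y) \<le> ereal e"
  unfolding rho1_def
proof (rule SUP_least)
  fix k
  let ?b = "\<lambda>m. e + real k * (1 - dens (sq m) A x) + real k * (1 - dens (sq m) A y)"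
  have lb: "?b \<longlonglongrightarrow> e + real k * (1 - 1) + real k * (1 - 1)"
    by (intro tendsto_intros dx dy)
  have "L k (x, y) \<le> limsup (\<lambda>m. ereal (?b m))"
    unfolding L_def using x y
    by (intro Limsup_mono always_eventually allI) (auto intro!: Av_bound[OF A e AEb] simp: Xp_def)
  also have "\<dots> = ereal e"
    using lb by (intro lim_imp_Limsup) auto
  finally show "L k (x, y) \<le> ereal e" .
qed

lemma real_tri_ereal:
  fixes u v w :: ereal
  assumes "u \<le> v + w" "0 \<le> u" "0 \<le> v" "0 \<le> w" "v < \<infinity>" "w < \<infinity>"
  shows "real_of_ereal u \<le> real_of_ereal v + real_of_ereal w"
  using assms by (cases u; cases v; cases w) auto

lemma ex_of_AE: "AE x in M. P x \<Longrightarrow> \<exists>x\<in>space M. P x"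
proof (rule ccontr)
  assume ae: "AE x in M. P x" and "\<not> (\<exists>x\<in>space M. P x)"
  then have "AE x in M. False" using ae by (auto elim!: eventually_mono)
  then show False using AE_False by simp
qed

theorem construct:
  "\<exists>\<rho>' G. semimetric_on (space M) \<rho>' \<and> (AE q in PM. \<rho>' (fst q) (snd q) = r q) \<and> G \<subseteq> space M \<and>
     (\<forall>x\<in>space M. \<exists>x'\<in>G. \<rho>' x x' = 0) \<and>
     (\<forall>i e. 0 \<le> e \<longrightarrow> (AE q in PM. fst q \<in> H i \<longrightarrow> snd q \<in> H i \<longrightarrow> r q \<le> e) \<longrightarrow>
        (\<forall>x\<in>G. \<forall>y\<in>G. x \<in> H i \<longrightarrow> y \<in> H i \<longrightarrow> \<rho>' x y \<le> e))"
proof -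
  define G0 where "G0 = {x. x \<in> Xp \<and> (\<forall>i. x \<in> H i \<longrightarrow> (\<lambda>m. dens (sq m) (H i) x) \<longlonglongrightarrow> 1)}"
  have aeG0: "AE x in M. x \<in> G0" using AE_dens by (simp add: G0_def)
  have fin_ae: "AE x in M. AE y in M. rho2 x y < \<infinity>"
    using PP.AE_pair[OF rho2_ae] by (auto elim!: eventually_mono)
  have "AE x in M. x \<in> G0 \<and> (AE y in M. rho2 x y < \<infinity>)" using aeG0 fin_ae by eventually_elim auto
  from ex_of_AE[OF this] obtain x0 where x0: "x0 \<in> space M" "x0 \<in> G0" "AE y in M. rho2 x0 y < \<infinity>" by blast
  define K where "K = {y \<in> Xp. rho2 x0 y < \<infinity>}"
  have aeK: "AE y in M. y \<in> K" using x0(3) AE_Xp by eventually_elim (auto simp: K_def)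
  define G where "G = G0 \<inter> K"
  have aeG: "AE y in M. y \<in> G" using aeK aeG0 by eventually_elim (auto simp: G_def)
  have x0Xp: "x0 \<in> Xp" using x0(2) by (simp add: G0_def)
  have GXp: "G \<subseteq> Xp" by (auto simp: G_def G0_def)
  have Gsp: "G \<subseteq> space M" using GXp by (auto simp: Xp_def)
  have x0K: "x0 \<in> K"
  proof -
    obtain y where y: "y \<in> space M" "y \<in> K" using ex_of_AE[OF aeK] by blast
    have "rho2 x0 x0 \<le> rho2 x0 y + rho2 y x0" using y x0Xp by (intro rho2_tri) (auto simp: K_def)
    also have "\<dots> < \<infinity>" using y by (simp add: K_def rho2_sym[of y x0])
    finally show ?thesis using x0Xp by (simp add: K_def)
  qed
  have x0G: "x0 \<in> G" using x0K x0(2) by (simp add: G_def)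
  have finG: "rho2 a b < \<infinity>" if "a \<in> G" "b \<in> G" for a b
  proof -
    have "rho2 a b \<le> rho2 a x0 + rho2 x0 b" using that GXp x0Xp by (intro rho2_tri) auto
    also have "\<dots> < \<infinity>" using that by (simp add: G_def K_def rho2_sym[of a x0])
    finally show ?thesis .
  qed
  define phi where "phi x = (if x \<in> G then x else x0)" for x
  have phiG: "phi x \<in> G" for x using x0G by (simp add: phi_def)
  define rr where "rr x y = (if phi x = phi y then 0 else real_of_ereal (rho2 (phi x) (phi y)))" for x y
  have rr_nn: "0 \<le> rr x y" for x y by (simp add: rr_def real_of_ereal_pos rho2_nn)
  have semi: "semimetric_on (space M) rr"
    unfolding semimetric_on_def
  proof (intro conjI ballI)
    fix x show "rr x x = 0" by (simp add: rr_def)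
  next
    fix x y show "0 \<le> rr x y" by (rule rr_nn)
  next
    fix x y show "rr x y = rr y x"
      using rho2_sym[of "phi x" "phi y"] by (auto simp: rr_def)
  next
    fix x y z
    let ?a = "phi x" and ?b = "phi y" and ?c = "phi z"
    have abc: "?a \<in> G" "?b \<in> G" "?c \<in> G" by (rule phiG)+
    show "rr x z \<le> rr x y + rr y z"
    proof (cases "?a = ?c")
      case True then show ?thesis using rr_nn[of x y] rr_nn[of y z] by (simp add: rr_def)
    next
      case ac: False
      show ?thesis
      proof (cases "?a = ?b")
        case True then show ?thesis using ac by (simp add: rr_def)
      next
        case ab: False
        show ?thesis
        proof (cases "?b = ?c")
          case True then show ?thesis using ac by (simp add: rr_def)
        next
          case bc: False
          have "real_of_ereal (rho2 ?a ?c) \<le> real_of_ereal (rho2 ?a ?b) + real_of_ereal (rho2 ?b ?c)"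
            using abc GXp finG[of ?a ?b] finG[of ?b ?c]
            by (intro real_tri_ereal rho2_tri rho2_nn) auto
          then show ?thesis using ac ab bc by (simp add: rr_def)
        qed
      qed
    qed
  qed
  have ae: "AE q in PM. rr (fst q) (snd q) = r q"
    using AE_fstI[OF aeG] AE_sndI[OF aeG] diag rho2_ae
  proof eventually_elim
    case (elim q)
    then show ?case by (simp add: rr_def phi_def)
  qed
  have phi0: "\<forall>x\<in>space M. \<exists>x'\<in>G. rr x x' = 0"
  proof
    fix x assume "x \<in> space M"
    have "phi (phi x) = phi x" using phiG[of x] by (simp add: phi_def)
    then have "rr x (phi x) = 0" by (simp add: rr_def)
    then show "\<exists>x'\<in>G. rr x x' = 0" using phiG[of x] by blast
  qed
  have bnd: "\<forall>i e. 0 \<le> e \<longrightarrow> (AE q in PM. fst q \<in> H i \<longrightarrow> snd q \<in> H i \<longrightarrow> r q \<le> e) \<longrightarrow>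
        (\<forall>x\<in>G. \<forall>y\<in>G. x \<in> H i \<longrightarrow> y \<in> H i \<longrightarrow> rr x y \<le> e)"
  proof (intro allI impI ballI)
    fix i e x y
    assume e: "0 \<le> e" and AEb: "AE q in PM. fst q \<in> H i \<longrightarrow> snd q \<in> H i \<longrightarrow> r q \<le> e"
      and x: "x \<in> G" and y: "y \<in> G" and xH: "x \<in> H i" and yH: "y \<in> H i"
    have px: "phi x = x" "phi y = y" using x y by (auto simp: phi_def)
    have dx: "(\<lambda>m. dens (sq m) (H i) x) \<longlonglongrightarrow> 1" and dy: "(\<lambda>m. dens (sq m) (H i) y) \<longlonglongrightarrow> 1"
      and xX: "x \<in> Xp" and yX: "y \<in> Xp"
      using x y xH yH by (auto simp: G_def G0_def)
    have AEb': "AE q in PM. fst q \<in> H i \<longrightarrow> snd q \<in> H i \<longrightarrow> r q \<le> e" by (rule AEb)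
    have "rho1 (x, y) \<le> ereal e" by (rule rho1_bound[OF H_sets e AEb xX yX dx dy])
    moreover have "rho1 (y, x) \<le> ereal e" by (rule rho1_bound[OF H_sets e AEb yX xX dy dx])
    ultimately have "rho2 x y \<le> ereal e" by (simp add: rho2_def)
    then have "real_of_ereal (rho2 x y) \<le> e"
      using rho2_nn[of x y] e by (cases "rho2 x y") auto
    then show "rr x y \<le> e" using px e by (simp add: rr_def)
  qed
  show ?thesis
    apply (rule exI[of _ rr], rule exI[of _ G])
    apply (intro conjI)
        apply (rule semi)
       apply (rule ae)
      apply (rule Gsp)
     apply (rule phi0)
    apply (rule bnd)
    done
qed

end

lemma approx_real:
  fixes \<nu> :: "real measure" and Bb :: "nat \<Rightarrow> real set"
  assumes nu: "prob_space \<nu>" and snu: "sets \<nu> = sets borel"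
    and Bo: "\<And>i. open (Bb i)" and Bbase: "\<And>S. open S \<Longrightarrow> \<exists>k. S = \<Union>{Bb n |n. n \<in> k}"
    and X: "X \<in> sets (completion \<nu>)" and e: "0 < e"
  shows "\<exists>k n. measure (completion \<nu>) (sym_diff X (\<Union>i\<in>{i\<in>k. i < n}. Bb i)) < e"
proof -
  interpret nu: prob_space \<nu> by (rule nu)
  interpret cnu: finite_measure "completion \<nu>"
    by (rule finite_measureI) (simp add: nu.emeasure_space_1)
  have Bs: "\<And>i. Bb i \<in> sets \<nu>" using Bo snu by auto
  obtain T N0 N' where XT: "X = T \<union> N0" "N0 \<subseteq> N'" "N' \<in> null_sets \<nu>" "T \<in> sets \<nu>"
    using X by (rule sets_completionE)
  have Tb: "T \<in> sets borel" using XT(4) snu by simp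
  have "emeasure \<nu> T = (INF U \<in> {U. T \<subseteq> U \<and> open U}. emeasure \<nu> U)"
    by (rule outer_regular[OF snu _ Tb]) (simp add: nu.emeasure_space_1)
  moreover have "emeasure \<nu> T < emeasure \<nu> T + ennreal (e/2)"
    using e by (simp add: nu.emeasure_eq_measure ennreal_plus[symmetric] ennreal_less_iff del: ennreal_plus)
  ultimately obtain U where U: "T \<subseteq> U" "open U" "emeasure \<nu> U < emeasure \<nu> T + ennreal (e/2)"
    by (metis (no_types, lifting) INF_less_iff mem_Collect_eq)
  have Us: "U \<in> sets \<nu>" using U(2) snu by auto
  have mU: "measure \<nu> U < measure \<nu> T + e/2"
    using U(3) e by (simp add: nu.emeasure_eq_measure ennreal_plus[symmetric] ennreal_less_iff del: ennreal_plus)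
  obtain k where k: "U = \<Union>{Bb n |n. n \<in> k}" using Bbase[OF U(2)] by blast
  define Op where "Op n = (\<Union>i\<in>{i\<in>k. i < n}. Bb i)" for n
  have Os: "Op n \<in> sets \<nu>" for n unfolding Op_def using Bs by auto
  have Oinc: "incseq Op" unfolding Op_def incseq_def by force
  have OU: "(\<Union>n. Op n) = U" unfolding Op_def k by force
  have "(\<lambda>n. measure \<nu> (Op n)) \<longlonglongrightarrow> measure \<nu> (\<Union>n. Op n)"
    using Os Oinc by (intro nu.finite_Lim_measure_incseq) auto
  then have "(\<lambda>n. measure \<nu> (Op n)) \<longlonglongrightarrow> measure \<nu> U" using OU by simp
  from LIMSEQ_D[OF this, of "e/2"] e obtain n where n: "\<bar>measure \<nu> (Op n) - measure \<nu> U\<bar> < e/2"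
    by auto
  have OnU: "Op n \<subseteq> U" using OU by auto
  have sub: "sym_diff X (Op n) \<subseteq> N' \<union> (U - T) \<union> (U - Op n)"
    using XT(1,2) U(1) OnU by auto
  have N'n: "N' \<in> sets \<nu>" "measure \<nu> N' = 0" using XT(3) by (auto simp: null_sets_def nu.emeasure_eq_measure)
  have "measure (completion \<nu>) (sym_diff X (Op n)) \<le> measure (completion \<nu>) (N' \<union> (U - T) \<union> (U - Op n))"
    using N'n Us XT(4) Os by (intro cnu.finite_measure_mono sub) auto
  also have "\<dots> = measure \<nu> (N' \<union> (U - T) \<union> (U - Op n))"
    using N'n Us XT(4) Os by (intro measure_completion) auto
  also have "\<dots> \<le> measure \<nu> N' + measure \<nu> (U - T) + measure \<nu> (U - Op n)"
    using N'n Us XT(4) Os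
    by (intro order_trans[OF measure_Un_le] add_mono measure_Un_le order_refl) auto
  also have "\<dots> = measure \<nu> U - measure \<nu> T + (measure \<nu> U - measure \<nu> (Op n))"
    using N'n Us XT(4) Os U(1) OnU by (simp add: nu.finite_measure_Diff)
  also have "\<dots> < e" using mU n by linarith
  finally show ?thesis unfolding Op_def by blast
qed

lemma lebesgue_gen:
  assumes L: "lebesgue_space M"
  obtains E A where "\<And>i. E i \<in> sets M" "A \<in> sets M" "space M - A \<in> null_sets M"
    "\<And>x y. x \<in> A \<Longrightarrow> y \<in> A \<Longrightarrow> x \<noteq> y \<Longrightarrow> \<exists>i. (x \<in> E i) \<noteq> (y \<in> E i)"
    "\<And>S e. S \<in> sets M \<Longrightarrow> 0 < e \<Longrightarrow> \<exists>n U. cellsys.saturated M E n U \<and> measure M (sym_diff S U) < e"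
proof -
  have M: "prob_space M" using L by (simp add: lebesgue_space_def)
  from L obtain \<nu> :: "real measure" where nu: "prob_space \<nu>" and snu: "sets \<nu> = sets borel"
    and iso: "iso_mod0 M (completion \<nu>)"
    unfolding lebesgue_space_def by (elim conjE exE)
  interpret M: prob_space M by (rule M)
  interpret nu: prob_space \<nu> by (rule nu)
  let ?N = "completion \<nu>"
  from iso obtain A B f where AB: "A \<in> sets M \<and> space M - A \<in> null_sets M \<and>
      B \<in> sets ?N \<and> space ?N - B \<in> null_sets ?N \<and>
      bij_betw f A B \<and>
      (\<forall>S. S \<subseteq> A \<longrightarrow> (S \<in> sets M \<longleftrightarrow> f ` S \<in> sets ?N)) \<and>
      (\<forall>S. S \<in> sets M \<longrightarrow> S \<subseteq> A \<longrightarrow> emeasure ?N (f ` S) = emeasure M S)"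
    unfolding iso_mod0_def by (elim exE)
  have A: "A \<in> sets M" "space M - A \<in> null_sets M" using AB by simp_all
  have B: "B \<in> sets ?N" "space ?N - B \<in> null_sets ?N" using AB by simp_all
  have bij: "bij_betw f A B" using AB by simp
  have isoS: "\<And>S. S \<subseteq> A \<Longrightarrow> (S \<in> sets M \<longleftrightarrow> f ` S \<in> sets ?N)" using AB by simp
  have isoM: "\<And>S. S \<in> sets M \<Longrightarrow> S \<subseteq> A \<Longrightarrow> emeasure ?N (f ` S) = emeasure M S" using AB by (simp del: emeasure_completion)
  have inj: "inj_on f A" and fA: "f ` A = B" using bij by (auto simp: bij_betw_def)
  obtain Bb :: "nat \<Rightarrow> real set" where Bo: "\<And>n. open (Bb n)"
    and Bbase: "\<And>S. open S \<Longrightarrow> \<exists>k. S = \<Union>{Bb n |n. n \<in> k}"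
    by (rule univ_second_countable_sequence) blast
  have borelN: "Y \<in> sets borel \<Longrightarrow> Y \<in> sets ?N" for Y using snu by auto
  have pre: "{x \<in> A. f x \<in> Y} \<in> sets M" if "Y \<in> sets ?N" for Y
  proof -
    have "f ` {x \<in> A. f x \<in> Y} = B \<inter> Y" using fA by auto
    also have "\<dots> \<in> sets ?N" using B(1) that by auto
    finally show ?thesis using isoS[of "{x \<in> A. f x \<in> Y}"] by auto
  qed
  define E where "E i = {x \<in> A. f x \<in> Bb i}" for i
  have Es: "E i \<in> sets M" for i unfolding E_def using Bo by (intro pre borelN) auto
  interpret cellsys M E by unfold_locales (rule Es)
  have sep: "\<exists>i. (x \<in> E i) \<noteq> (y \<in> E i)" if "x \<in> A" "y \<in> A" "x \<noteq> y" for x y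
  proof -
    have "f x \<noteq> f y" using inj that by (auto dest: inj_onD)
    moreover obtain k where k: "- {f y} = \<Union>{Bb n |n. n \<in> k}" using Bbase[of "- {f y}"] by auto
    ultimately have "f x \<in> \<Union>{Bb n |n. n \<in> k}" by (metis ComplI singletonD)
    then obtain n where "f x \<in> Bb n" "n \<in> k" by auto
    moreover have "f y \<notin> Bb n" using k \<open>n \<in> k\<close> by blast
    ultimately have "f x \<in> Bb n" "f y \<notin> Bb n" by auto
    then show ?thesis using that by (auto simp: E_def)
  qed
  have mtrans: "measure M Z = measure ?N (f ` Z)" if "Z \<in> sets M" "Z \<subseteq> A" for Z
    using isoM[OF that] by (simp add: measure_def)
  have gen: "\<exists>n U. saturated n U \<and> measure M (sym_diff S U) < e" if S: "S \<in> sets M" and e: "0 < e" for S e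
  proof -
    let ?S' = "S \<inter> A"
    have S's: "?S' \<in> sets M" using S A by auto
    let ?X = "f ` ?S'"
    have Xs: "?X \<in> sets ?N" using isoS[of ?S'] S's by auto
    obtain k n where kn: "measure ?N (sym_diff ?X (\<Union>i\<in>{i\<in>k. i < n}. Bb i)) < e"
      using approx_real[OF nu snu Bo Bbase Xs e] by blast
    define Op where "Op = (\<Union>i\<in>{i\<in>k. i < n}. Bb i)"
    have Opo: "open Op" unfolding Op_def using Bo by auto
    define U where "U = {x \<in> A. f x \<in> Op}"
    have Us: "U \<in> sets M" unfolding U_def using Opo by (intro pre borelN) auto
    have SUs: "sym_diff ?S' U \<in> sets M" using S's Us by auto
    have SUA: "sym_diff ?S' U \<subseteq> A" by (auto simp: U_def)
    have img: "f ` sym_diff ?S' U \<subseteq> sym_diff ?X Op"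
    proof
      fix z assume "z \<in> f ` sym_diff ?S' U"
      then obtain a where a: "a \<in> sym_diff ?S' U" "z = f a" by auto
      show "z \<in> sym_diff ?X Op"
      proof (cases "a \<in> ?S'")
        case True
        then have "a \<notin> U" using a by auto
        then show ?thesis using True a by (auto simp: U_def)
      next
        case False
        then have aU: "a \<in> U" using a by auto
        have "f a \<notin> ?X"
        proof
          assume "f a \<in> ?X"
          then obtain b where "b \<in> ?S'" "f a = f b" by auto
          then have "a = b" using inj aU by (auto simp: U_def dest: inj_onD)
          then show False using False \<open>b \<in> ?S'\<close> by simp
        qed
        then show ?thesis using aU a by (auto simp: U_def)
      qed
    qed
    interpret cN: finite_measure ?N by (rule finite_measureI) (simp add: nu.emeasure_space_1)
    have XOs: "sym_diff ?X Op \<in> sets ?N" using Xs borelN[of Op] Opo by auto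
    have "measure M (sym_diff ?S' U) = measure ?N (f ` sym_diff ?S' U)" by (rule mtrans[OF SUs SUA])
    also have "\<dots> \<le> measure ?N (sym_diff ?X Op)"
      using img XOs isoS[OF SUA] SUs by (intro cN.finite_measure_mono) auto
    also have "\<dots> < e" using kn by (simp add: Op_def)
    finally have lt: "measure M (sym_diff ?S' U) < e" .
    have "measure M (sym_diff S U) \<le> measure M (sym_diff ?S' U \<union> (space M - A))"
      using S Us SUs A by (intro M.finite_measure_mono) (auto dest: sets.sets_into_space)
    also have "\<dots> \<le> measure M (sym_diff ?S' U) + measure M (space M - A)"
      using SUs A by (intro measure_Un_le) auto
    also have "measure M (space M - A) = 0" using A(2) by (simp add: null_sets_def M.emeasure_eq_measure)
    finally have lt2: "measure M (sym_diff S U) < e" using lt by simp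
    have sat: "saturated n U"
      unfolding saturated_def
    proof (intro conjI ballI subsetI)
      show "U \<in> sets M" by (rule Us)
      fix x y assume x: "x \<in> U" and y: "y \<in> cell n x"
      from x obtain i where i: "i \<in> k" "i < n" "f x \<in> Bb i" "x \<in> A" by (auto simp: U_def Op_def)
      then have "x \<in> E i" by (simp add: E_def)
      then have "y \<in> E i" using y i(2) by (auto simp: cell_def)
      then show "y \<in> U" using i by (auto simp: E_def U_def Op_def)
    qed
    show ?thesis using sat lt2 by blast
  qed
  show ?thesis
    by (rule that[of E A, OF Es A(1) A(2) sep gen])
qed

lemma diag_null:
  fixes E :: "nat \<Rightarrow> 'a set"
  assumes M: "prob_space M" and cont: "continuous_measure M" and Es: "\<And>i. E i \<in> sets M"
    and A: "A \<in> sets M" "space M - A \<in> null_sets M"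
    and sep: "\<And>x y. x \<in> A \<Longrightarrow> y \<in> A \<Longrightarrow> x \<noteq> y \<Longrightarrow> \<exists>i. (x \<in> E i) \<noteq> (y \<in> E i)"
  shows "AE q in M \<Otimes>\<^sub>M M. fst q \<noteq> snd q"
proof -
  interpret M: prob_space M by (rule M)
  interpret PP: pair_prob_space M M by unfold_locales
  have [measurable]: "\<And>i. E i \<in> sets M" by (rule Es)
  define Dg where "Dg = {q \<in> space (M \<Otimes>\<^sub>M M). \<forall>i. (fst q \<in> E i \<longleftrightarrow> snd q \<in> E i)}"
  have "Dg = space (M \<Otimes>\<^sub>M M) \<inter> (\<Inter>i. (E i \<times> E i) \<union> ((space M - E i) \<times> (space M - E i)))"
    by (auto simp: Dg_def space_pair_measure)
  also have "\<dots> \<in> sets (M \<Otimes>\<^sub>M M)"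
    by (intro sets.Int sets.top sets.countable_INT' sets.Un pair_measureI sets.Diff Es) auto
  finally have Dgs[measurable]: "Dg \<in> sets (M \<Otimes>\<^sub>M M)" .
  have slice: "emeasure M (Pair x -` Dg) = 0" if x: "x \<in> A" for x
  proof -
    have xs: "x \<in> space M" using x A(1) sets.sets_into_space by blast
    have "Pair x -` Dg \<subseteq> {x} \<union> (space M - A)"
    proof
      fix y assume "y \<in> Pair x -` Dg"
      then have y: "y \<in> space M" "\<forall>i. (x \<in> E i \<longleftrightarrow> y \<in> E i)" by (auto simp: Dg_def space_pair_measure)
      show "y \<in> {x} \<union> (space M - A)"
      proof (cases "y \<in> A")
        case True
        then have "y = x" using sep[OF x True] y(2) by auto
        then show ?thesis by simp
      qed (use y in auto)
    qed
    moreover have "{x} \<union> (space M - A) \<in> null_sets M"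
      using cont xs A(2) by (intro null_sets.Un) (auto simp: continuous_measure_def)
    ultimately show ?thesis
      by (metis null_sets_subset sets_Pair1 Dgs null_setsD1)
  qed
  have aeA: "AE x in M. x \<in> A" using A(2) by (rule AE_I') auto
  have "emeasure (M \<Otimes>\<^sub>M M) Dg = (\<integral>\<^sup>+x. emeasure M (Pair x -` Dg) \<partial>M)"
    by (rule M.emeasure_pair_measure_alt[OF Dgs])
  also have "\<dots> = (\<integral>\<^sup>+x. 0 \<partial>M)"
    by (rule nn_integral_cong_AE) (use aeA in \<open>auto elim!: eventually_mono simp: slice\<close>)
  finally have "Dg \<in> null_sets (M \<Otimes>\<^sub>M M)" by (simp add: null_sets_def)
  then have "AE q in M \<Otimes>\<^sub>M M. q \<notin> Dg" by (rule AE_not_in)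
  then show ?thesis using AE_space by eventually_elim (auto simp: Dg_def)
qed

lemma almost_metric_version:
  fixes \<rho> :: "'a \<Rightarrow> 'a \<Rightarrow> real"
  assumes M: "prob_space M" and am: "almost_metric M \<rho>"
  shows "\<exists>r. r \<in> borel_measurable (M \<Otimes>\<^sub>M M) \<and> (\<forall>q. 0 \<le> r q) \<and>
    (AE q in M \<Otimes>\<^sub>M M. r q = \<rho> (fst q) (snd q)) \<and>
    (AE q in M \<Otimes>\<^sub>M M. r (snd q, fst q) = r q) \<and>
    (AE x in M. AE y in M. AE z in M. r (x, z) \<le> r (x, y) + r (y, z))"
proof -
  interpret cellsys M "\<lambda>_. {}" by (intro cellsys.intro M cellsys_axioms.intro) auto
  have meas: "(\<lambda>(x, y). \<rho> x y) \<in> borel_measurable (completion PM)"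
    and nn: "\<And>x y. x \<in> space M \<Longrightarrow> y \<in> space M \<Longrightarrow> 0 \<le> \<rho> x y"
    and sym: "AE p in PM. \<rho> (fst p) (snd p) = \<rho> (snd p) (fst p)"
    and tri: "AE t in M \<Otimes>\<^sub>M PM. \<rho> (fst t) (snd (snd t)) \<le> \<rho> (fst t) (fst (snd t)) + \<rho> (fst (snd t)) (snd (snd t))"
  proof -
    note am' = am[unfolded almost_metric_def]
    show "(\<lambda>(x, y). \<rho> x y) \<in> borel_measurable (completion PM)" using am' by (elim conjE)
    show "\<And>x y. x \<in> space M \<Longrightarrow> y \<in> space M \<Longrightarrow> 0 \<le> \<rho> x y" using am' by (elim conjE) blast
    show "AE p in PM. \<rho> (fst p) (snd p) = \<rho> (snd p) (fst p)" using am' by (elim conjE)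
    show "AE t in M \<Otimes>\<^sub>M PM. \<rho> (fst t) (snd (snd t)) \<le> \<rho> (fst t) (fst (snd t)) + \<rho> (fst (snd t)) (snd (snd t))" using am' by (elim conjE)
  qed
  obtain g' where g'[measurable]: "g' \<in> borel_measurable PM" and eqg: "AE q in PM. (\<lambda>(x, y). \<rho> x y) q = g' q"
    using completion_ex_borel_measurable_real[OF meas] by blast
  define r where "r q = max 0 (g' q)" for q
  have rm: "r \<in> borel_measurable PM" unfolding r_def by measurable
  have rnn: "\<forall>q. 0 \<le> r q" by (simp add: r_def)
  have EQ: "AE q in PM. r q = \<rho> (fst q) (snd q)"
    using eqg AE_space
  proof eventually_elim
    case (elim q)
    then have "0 \<le> \<rho> (fst q) (snd q)" by (intro nn) (auto simp: space_pair_measure)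
    then show ?case using elim by (cases q) (simp add: r_def)
  qed
  have SYM: "AE q in PM. r (snd q, fst q) = r q"
    using AE_swap[OF EQ] EQ sym by eventually_elim simp
  interpret P3: pair_prob_space M PM by (intro pair_prob_space.intro pair_sigma_finite.intro M PP.P.prob_space_axioms prob_space_imp_sigma_finite)
  have t1: "AE x in M. AE w in PM. \<rho> x (snd w) \<le> \<rho> x (fst w) + \<rho> (fst w) (snd w)"
    using P3.AE_pair[OF tri] by simp
  have t2: "AE x in M. AE y in M. AE z in M. \<rho> x z \<le> \<rho> x y + \<rho> y z"
    using t1 by (rule eventually_mono) (drule PP.AE_pair, simp)
  have E2: "AE x in M. AE y in M. r (x, y) = \<rho> x y"
    using PP.AE_pair[OF EQ] by simp
  have TRI: "AE x in M. AE y in M. AE z in M. r (x, z) \<le> r (x, y) + r (y, z)"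
    using t2 E2
  proof eventually_elim
    case (elim x)
    show ?case
      using elim(1) elim(2) E2
    proof eventually_elim
      case (elim y)
      show ?case
        using elim(1) elim(3) \<open>AE y in M. r (x, y) = \<rho> x y\<close>
        by eventually_elim (use elim(2) in simp)
    qed
  qed
  show ?thesis using rm rnn EQ SYM TRI by blast
qed

theorem mainTheorem2:
  fixes M :: "'a measure" and \<rho> :: "'a \<Rightarrow> 'a \<Rightarrow> real"
  assumes "lebesgue_space M" and "continuous_measure M" and "almost_metric M \<rho>"
  shows "(\<exists>\<rho>'. semimetric_on (space M) \<rho>' \<and>
            (AE p in M \<Otimes>\<^sub>M M. \<rho>' (fst p) (snd p) = \<rho> (fst p) (snd p)))
       \<and> (essentially_separable M \<rho> \<longrightarrow>
           (\<exists>\<rho>'. semimetric_on (space M) \<rho>' \<and>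
              (AE p in M \<Otimes>\<^sub>M M. \<rho>' (fst p) (snd p) = \<rho> (fst p) (snd p)) \<and>
              separable_on (space M) \<rho>' \<and> admissible M \<rho>'))"
proof -
  have M: "prob_space M" using assms(1) by (simp add: lebesgue_space_def)
  interpret M: prob_space M by (rule M)
  obtain E A where Es: "\<And>i. E i \<in> sets M" and A: "A \<in> sets M" "space M - A \<in> null_sets M"
    and sep: "\<And>x y. x \<in> A \<Longrightarrow> y \<in> A \<Longrightarrow> x \<noteq> y \<Longrightarrow> \<exists>i. (x \<in> E i) \<noteq> (y \<in> E i)"
    and gen: "\<And>S e. S \<in> sets M \<Longrightarrow> 0 < e \<Longrightarrow> \<exists>n U. cellsys.saturated M E n U \<and> measure M (sym_diff S U) < e"
    using lebesgue_gen[OF assms(1)] by metis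
  interpret gencellsys M E
    by (intro gencellsys.intro cellsys.intro M cellsys_axioms.intro gencellsys_axioms.intro Es gen)
  have diag: "AE q in PM. fst q \<noteq> snd q" by (rule diag_null[OF M assms(2) Es A sep])
  obtain r where rm: "r \<in> borel_measurable PM" and rnn: "\<forall>q. 0 \<le> r q"
    and EQ: "AE q in PM. r q = \<rho> (fst q) (snd q)"
    and SYM: "AE q in PM. r (snd q, fst q) = r q"
    and TRI: "AE x in M. AE y in M. AE z in M. r (x, z) \<le> r (x, y) + r (y, z)"
    using almost_metric_version[OF M assms(3)] by blast
  have ms: "msetting M E r H" if "\<And>i. H i \<in> sets M" for H
    by (intro msetting.intro msetting_axioms.intro gencellsys_axioms rm rnn[rule_format] SYM TRI diag that)
  have transfer: "AE p in PM. \<rho>' (fst p) (snd p) = \<rho> (fst p) (snd p)"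
    if "AE q in PM. \<rho>' (fst q) (snd q) = r q" for \<rho>'
    using that EQ by eventually_elim simp
  have part1: "\<exists>\<rho>'. semimetric_on (space M) \<rho>' \<and> (AE p in PM. \<rho>' (fst p) (snd p) = \<rho> (fst p) (snd p))"
  proof -
    interpret ms: msetting M E r "\<lambda>_. {}" by (rule ms) simp
    obtain \<rho>' where "semimetric_on (space M) \<rho>'" "AE q in PM. \<rho>' (fst q) (snd q) = r q"
      using ms.construct by blast
    then show ?thesis using transfer by blast
  qed
  have part2: "\<exists>\<rho>'. semimetric_on (space M) \<rho>' \<and>
              (AE p in M \<Otimes>\<^sub>M M. \<rho>' (fst p) (snd p) = \<rho> (fst p) (snd p)) \<and>
              separable_on (space M) \<rho>' \<and> admissible M \<rho>'"
    if es: "essentially_separable M \<rho>"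
  proof -
    have "\<forall>j::nat. \<exists>\<A>. countable \<A> \<and> \<A> \<subseteq> sets M \<and> space M \<subseteq> \<Union>\<A> \<and> (\<forall>A\<in>\<A>. ess_diam M \<rho> A < ereal (1 / Suc j))"
      using es unfolding essentially_separable_def by simp
    then obtain \<A> where \<A>: "\<And>j. countable (\<A> j)" "\<And>j. \<A> j \<subseteq> sets M" "\<And>j. space M \<subseteq> \<Union>(\<A> j)"
      "\<And>j A. A \<in> \<A> j \<Longrightarrow> ess_diam M \<rho> A < ereal (1 / Suc j)"
      by metis
    define \<C> where "\<C> = (\<Union>j. \<A> j)"
    have Cc: "countable \<C>" unfolding \<C>_def using \<A>(1) by auto
    have Cne: "\<C> \<noteq> {}"
    proof
      assume "\<C> = {}"
      then have "space M = {}" using \<A>(3)[of 0] by (auto simp: \<C>_def)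
      then show False using M.not_empty by simp
    qed
    define H where "H = from_nat_into \<C>"
    have rH: "range H = \<C>" unfolding H_def using Cne Cc by simp
    have Hs: "H i \<in> sets M" for i using rH \<A>(2) by (auto simp: \<C>_def)
    interpret ms: msetting M E r H by (rule ms[OF Hs])
    obtain \<rho>' G where sm: "semimetric_on (space M) \<rho>'" and ae: "AE q in PM. \<rho>' (fst q) (snd q) = r q"
      and Gsp: "G \<subseteq> space M" and phi0: "\<forall>x\<in>space M. \<exists>x'\<in>G. \<rho>' x x' = 0"
      and bnd: "\<forall>i e. 0 \<le> e \<longrightarrow> (AE q in PM. fst q \<in> H i \<longrightarrow> snd q \<in> H i \<longrightarrow> r q \<le> e) \<longrightarrow>
        (\<forall>x\<in>G. \<forall>y\<in>G. x \<in> H i \<longrightarrow> y \<in> H i \<longrightarrow> \<rho>' x y \<le> e)"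
      using ms.construct by blast
    have aeb: "AE q in PM. fst q \<in> B \<longrightarrow> snd q \<in> B \<longrightarrow> r q \<le> 1 / Suc j" if B: "B \<in> \<A> j" for B j
    proof -
      let ?f = "\<lambda>(x, y). if x \<in> B \<and> y \<in> B then ereal (\<rho> x y) else - \<infinity>"
      have "AE q in completion PM. ?f q \<le> esssup (completion PM) ?f" by (rule esssup_AE)
      then have "AE q in PM. ?f q \<le> ess_diam M \<rho> B" by (simp add: AE_completion_iff ess_diam_def)
      then show ?thesis
        using EQ
      proof eventually_elim
        case (elim q)
        show ?case
        proof (intro impI)
          assume "fst q \<in> B" "snd q \<in> B"
          then have "ereal (\<rho> (fst q) (snd q)) \<le> ess_diam M \<rho> B"
            using elim(1) by (cases q) auto
          then have "ereal (\<rho> (fst q) (snd q)) < ereal (1 / Suc j)"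
            using \<A>(4)[OF B] by (rule order.strict_trans1)
          then show "r q \<le> 1 / Suc j" using elim(2) by simp
        qed
      qed
    qed
    define c where "c i = (SOME x. x \<in> G \<inter> H i)" for i
    define D where "D = c ` {i. G \<inter> H i \<noteq> {}}"
    have cG: "c i \<in> G \<inter> H i" if "G \<inter> H i \<noteq> {}" for i
      unfolding c_def using that by (metis (mono_tags, lifting) equals0I someI_ex)
    have sep_on: "separable_on (space M) \<rho>'"
      unfolding separable_on_def
    proof (intro exI[of _ D] conjI ballI allI impI)
      show "countable D" unfolding D_def by simp
      show "D \<subseteq> space M" unfolding D_def using cG Gsp by auto
      fix x :: 'a and e :: real assume x: "x \<in> space M" and e: "0 < e"
      obtain j :: nat where j: "1 / Suc j < e"
        using e by (metis nat_approx_posE of_nat_Suc)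
      obtain x' where x': "x' \<in> G" "\<rho>' x x' = 0" using phi0 x by blast
      have "x' \<in> space M" using x' Gsp by auto
      then obtain B where B: "B \<in> \<A> j" "x' \<in> B" using \<A>(3)[of j] by auto
      then have "B \<in> range H" using rH by (auto simp: \<C>_def)
      then obtain i where i: "B = H i" by auto
      have GH: "G \<inter> H i \<noteq> {}" using x' B i by auto
      have ci: "c i \<in> G" "c i \<in> H i" using cG[OF GH] by auto
      have "\<rho>' x' (c i) \<le> 1 / Suc j"
        using bnd aeb[OF B(1)] x'(1) ci B(2) i by auto
      moreover have "\<rho>' x (c i) \<le> \<rho>' x x' + \<rho>' x' (c i)"
        using sm x \<open>x' \<in> space M\<close> ci Gsp unfolding semimetric_on_def by blast
      ultimately have "\<rho>' x (c i) < e" using x' j by simp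
      moreover have "c i \<in> D" using GH unfolding D_def by auto
      ultimately show "\<exists>c\<in>D. \<rho>' x c < e" by blast
    qed
    have adm: "admissible M \<rho>'"
      unfolding admissible_def using sm sep_on by (intro conjI bexI[of _ "space M"]) auto
    show ?thesis using sm transfer[OF ae] sep_on adm by blast
  qed
  show ?thesis using part1 part2 by blast
qed

end
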